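(* Let $A$ be a circular $m\times n$ matrix with no dominating rows, and let $\Gamma$ be a circuit in $F(A)$ with winding number $p$ and $s$ row arcs. Let $L\subseteq[n]$ be the set of essential bullets of $\Gamma$ and $F\subseteq[m]$ the set of rows $i$ of $A$ whose row arc $a_i$ belongs to $\Gamma$. Then the submatrix of $A$ induced by the rows in $F$ and the columns in $L$ is isomorphic (up to row and column permutations) to the circulant matrix $C_s^p$, and $\gcd(s,p)=1$.
   Context: Notation: $[n]=\{1,\dots,n\}$ with addition mod $n$ (index $0$ identified with $n$); for $a,c\in[n]$ with $t\ge0$ minimal such that $a+t\equiv c\pmod n$, $[a,c)_n=\{a,\dots,a+t-1\}$ (mod $n$). An $m\times n$ $\{0,1\}$-matrix $A=(a_{ij})$ is circular if for each row $i$ there are $\ell_i\in[n]$ and an integer $2\le k_i\le n-1$ with row $i$ the incidence vector of $[\ell_i,\ell_i+k_i)_n$. Row $i$ dominates row $\ell\ne i$ if $a_{ij}\ge a_{\ell j}$ for all $j$. $C_s^p$ is the $s\times s$ matrix whose row $i$ is the incidence vector of $[i,i+p)_s$. $F(A)$: digraph on $[n]$ (labels mod $n$) with row arcs $a_i=(\ell_i-1,\ell_i+k_i-1)$ ($i\in[m]$, length $k_i$), forward short arcs $(j-1,j)$ (length $1$), reverse short arcs $(j,j-1)$ (length $-1$). A circuit is a simple directed circuit; winding number $p(\Gamma)$: $p(\Gamma)n=$ sum of its arc lengths. For a circuit $\Gamma$: $\circ(\Gamma)=\{j:(j-1,j)\in E(\Gamma)\}$, $\otimes(\Gamma)=\{j:(j,j-1)\in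 E(\Gamma)\}$, bullets $\bullet(\Gamma)=[n]\setminus(\circ(\Gamma)\cup\otimes(\Gamma))$; essential bullets are bullets that are nodes of $\Gamma$. *)

theory Defs
  imports Main
begin

text \<open>Representative in [n] = {1..n} of an integer modulo n (0 is identified with n).\<close>
definition cyc :: "nat \<Rightarrow> int \<Rightarrow> nat" where
  "cyc n x = nat ((x - 1) mod int n) + 1"

definition circ_interval :: "nat \<Rightarrow> nat \<Rightarrow> nat \<Rightarrow> nat set" where
  "circ_interval n a k = {cyc n (int a + int t) | t. t < k}"

text \<open>A (m x n) {0,1}-matrix A (entries as booleans, rows 1..m, columns 1..n) is circular,
  row i being the incidence vector of [l i, l i + k i)_n with l i in [n] and 2 <= k i <= n-1.
  The data l, k are uniquely determined by A.\<close>
definition circular_with ::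
  "nat \<Rightarrow> nat \<Rightarrow> (nat \<Rightarrow> nat \<Rightarrow> bool) \<Rightarrow> (nat \<Rightarrow> nat) \<Rightarrow> (nat \<Rightarrow> nat) \<Rightarrow> bool" where
  "circular_with m n A l k \<longleftrightarrow>
     (\<forall>i\<in>{1..m}. l i \<in> {1..n} \<and> 2 \<le> k i \<and> k i \<le> n - 1 \<and>
        (\<forall>j\<in>{1..n}. A i j \<longleftrightarrow> j \<in> circ_interval n (l i) (k i)))"

definition dominates :: "nat \<Rightarrow> (nat \<Rightarrow> nat \<Rightarrow> bool) \<Rightarrow> nat \<Rightarrow> nat \<Rightarrow> bool" where
  "dominates n A i i' \<longleftrightarrow> (\<forall>j\<in>{1..n}. A i' j \<longrightarrow> A i j)"

definition no_dominating_rows :: "nat \<Rightarrow> nat \<Rightarrow> (nat \<Rightarrow> nat \<Rightarrow> bool) \<Rightarrow> bool" where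
  "no_dominating_rows m n A \<longleftrightarrow>
     (\<forall>i\<in>{1..m}. \<forall>i'\<in>{1..m}. i \<noteq> i' \<longrightarrow> \<not> dominates n A i i')"

text \<open>Arcs of the multi-digraph F(A): row arcs a_i, forward short arcs (j-1,j),
  reverse short arcs (j,j-1).\<close>
datatype arc = RowArc nat | Fwd nat | Rev nat

fun arc_tail :: "nat \<Rightarrow> (nat \<Rightarrow> nat) \<Rightarrow> (nat \<Rightarrow> nat) \<Rightarrow> arc \<Rightarrow> nat" where
  "arc_tail n l k (RowArc i) = cyc n (int (l i) - 1)"
| "arc_tail n l k (Fwd j) = cyc n (int j - 1)"
| "arc_tail n l k (Rev j) = cyc n (int j)"

fun arc_head :: "nat \<Rightarrow> (nat \<Rightarrow> nat) \<Rightarrow> (nat \<Rightarrow> nat) \<Rightarrow> arc \<Rightarrow> nat" where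
  "arc_head n l k (RowArc i) = cyc n (int (l i) + int (k i) - 1)"
| "arc_head n l k (Fwd j) = cyc n (int j)"
| "arc_head n l k (Rev j) = cyc n (int j - 1)"

fun arc_length :: "(nat \<Rightarrow> nat) \<Rightarrow> arc \<Rightarrow> int" where
  "arc_length k (RowArc i) = int (k i)"
| "arc_length k (Fwd j) = 1"
| "arc_length k (Rev j) = -1"

definition F_arcs :: "nat \<Rightarrow> nat \<Rightarrow> arc set" where
  "F_arcs m n = RowArc ` {1..m} \<union> Fwd ` {1..n} \<union> Rev ` {1..n}"

text \<open>A (simple directed) circuit of F(A), given as the cyclic list of its arcs:
  consecutive arcs are linked head-to-tail (cyclically) and the visited nodes are distinct.\<close>
definition is_circuit :: "nat \<Rightarrow> nat \<Rightarrow> (nat \<Rightarrow> nat) \<Rightarrow> (nat \<Rightarrow> nat) \<Rightarrow> arc list \<Rightarrow> bool" where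
  "is_circuit m n l k G \<longleftrightarrow>
     G \<noteq> [] \<and> set G \<subseteq> F_arcs m n \<and>
     (\<forall>t < length G. arc_head n l k (G ! t) = arc_tail n l k (G ! ((t + 1) mod length G))) \<and>
     distinct (map (arc_tail n l k) G)"

definition winding_number :: "nat \<Rightarrow> (nat \<Rightarrow> nat) \<Rightarrow> arc list \<Rightarrow> int \<Rightarrow> bool" where
  "winding_number n k G p \<longleftrightarrow> sum_list (map (arc_length k) G) = p * int n"

definition circuit_nodes :: "nat \<Rightarrow> (nat \<Rightarrow> nat) \<Rightarrow> (nat \<Rightarrow> nat) \<Rightarrow> arc list \<Rightarrow> nat set" where
  "circuit_nodes n l k G = set (map (arc_tail n l k) G)"

definition circ_set :: "nat \<Rightarrow> arc list \<Rightarrow> nat set" where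
  "circ_set n G = {j\<in>{1..n}. Fwd j \<in> set G}"

definition otimes_set :: "nat \<Rightarrow> arc list \<Rightarrow> nat set" where
  "otimes_set n G = {j\<in>{1..n}. Rev j \<in> set G}"

definition bullets :: "nat \<Rightarrow> arc list \<Rightarrow> nat set" where
  "bullets n G = {1..n} - (circ_set n G \<union> otimes_set n G)"

definition essential_bullets :: "nat \<Rightarrow> (nat \<Rightarrow> nat) \<Rightarrow> (nat \<Rightarrow> nat) \<Rightarrow> arc list \<Rightarrow> nat set" where
  "essential_bullets n l k G = bullets n G \<inter> circuit_nodes n l k G"

definition row_arc_rows :: "nat \<Rightarrow> arc list \<Rightarrow> nat set" where
  "row_arc_rows m G = {i\<in>{1..m}. RowArc i \<in> set G}"

text \<open>Entry (a,b) of C_s^p (a,b in [s]): row a is the incidence vector of the p consecutive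
  indices a, a+1, ..., a+p-1 (mod s).\<close>
definition circulant :: "nat \<Rightarrow> int \<Rightarrow> nat \<Rightarrow> nat \<Rightarrow> bool" where
  "circulant s p a b \<longleftrightarrow> (int b - int a) mod int s < p"

end

theory Submission
  imports Defs
begin



lemma cyc_int: "n > 0 \<Longrightarrow> int (cyc n x) = (x - 1) mod int n + 1"
  unfolding cyc_def by simp

lemma cyc_range: "n > 0 \<Longrightarrow> cyc n x \<in> {1..n}"
proof -
  assume n: "n > 0"
  have a: "(x - 1) mod int n < int n" "(x - 1) mod int n \<ge> 0" using n by simp_all
  have "int (cyc n x) \<ge> 1" "int (cyc n x) \<le> int n" using a cyc_int[OF n, of x] by linarith+
  then show ?thesis by simp
qed

lemma cyc_mod: "n > 0 \<Longrightarrow> int (cyc n x) mod int n = x mod int n"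
proof -
  assume n: "n > 0"
  have "((x - 1) mod int n + 1) mod int n = ((x - 1) + 1) mod int n"
    by (simp add: mod_add_left_eq)
  then show ?thesis using cyc_int[OF n] by simp
qed

lemma cyc_id: "c \<in> {1..n} \<Longrightarrow> cyc n (int c) = c"
proof -
  assume c: "c \<in> {1..n}"
  then have "(int c - 1) mod int n = int c - 1" by (intro mod_pos_pos_trivial) auto
  then show ?thesis unfolding cyc_def using c by auto
qed

lemma cyc_eq_cyc: "n > 0 \<Longrightarrow> cyc n x = cyc n y \<longleftrightarrow> x mod int n = y mod int n"
proof -
  assume n: "n > 0"
  show ?thesis
  proof
    assume "cyc n x = cyc n y" then show "x mod int n = y mod int n" using cyc_mod[OF n] by metis
  next
    assume h: "x mod int n = y mod int n"
    have "(x - 1) mod int n = (y - 1) mod int n" using h by (metis mod_diff_left_eq)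
    then show "cyc n x = cyc n y" unfolding cyc_def by simp
  qed
qed

lemma cyc_eq_iff: "n > 0 \<Longrightarrow> c \<in> {1..n} \<Longrightarrow> cyc n x = c \<longleftrightarrow> x mod int n = int c mod int n"
  using cyc_eq_cyc[of n x "int c"] cyc_id[of c n] by simp




lemma circ_interval_iff:
  assumes n: "n > 0" and c: "c \<in> {1..n}"
  shows "c \<in> circ_interval n a k \<longleftrightarrow> (int c - int a) mod int n < int k"
proof
  assume "c \<in> circ_interval n a k"
  then obtain t where t: "t < k" "c = cyc n (int a + int t)" unfolding circ_interval_def by auto
  have "int c mod int n = (int a + int t) mod int n" using t cyc_mod[OF n] by simp
  then have "(int c - int a) mod int n = int t mod int n" by (metis add_diff_cancel_left' mod_diff_left_eq)
  also have "\<dots> \<le> int t" using n by (simp add: zmod_le_nonneg_dividend)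
  finally show "(int c - int a) mod int n < int k" using t by simp
next
  assume h: "(int c - int a) mod int n < int k"
  define t where "t = nat ((int c - int a) mod int n)"
  have t0: "int t = (int c - int a) mod int n" unfolding t_def using n by simp
  have "t < k" using h t0 by simp
  moreover have "cyc n (int a + int t) = c"
  proof -
    have "(int a + int t) mod int n = (int a + (int c - int a)) mod int n"
      unfolding t0 by (simp add: mod_add_right_eq)
    then show ?thesis using cyc_eq_iff[OF n c] by simp
  qed
  ultimately show "c \<in> circ_interval n a k" unfolding circ_interval_def by blast
qed

fun isR :: "arc \<Rightarrow> bool" where "isR (RowArc i) = True" | "isR _ = False"
fun isF :: "arc \<Rightarrow> bool" where "isF (Fwd i) = True" | "isF _ = False"
fun isV :: "arc \<Rightarrow> bool" where "isV (Rev i) = True" | "isV _ = False"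
fun ridx :: "arc \<Rightarrow> nat" where "ridx (RowArc i) = i" | "ridx (Fwd i) = i" | "ridx (Rev i) = i"

lemma arc_cases3: "isR e \<or> isF e \<or> isV e" by (cases e) auto

locale cc =
  fixes m n :: nat and A :: "nat \<Rightarrow> nat \<Rightarrow> bool" and l k :: "nat \<Rightarrow> nat"
    and G :: "arc list" and p :: int
  assumes circ: "circular_with m n A l k"
    and nodom: "no_dominating_rows m n A"
    and circuit: "is_circuit m n l k G"
    and nondeg: "\<not> (\<exists>j. set G = {Fwd j, Rev j})"
    and wind: "winding_number n k G p"
begin

definition r where "r = length G"
definition E where "E t = G ! (t mod r)"
definition tv where "tv t = arc_tail n l k (E t)"
definition hv where "hv t = arc_head n l k (E t)"

lemma r_pos: "r > 0" using circuit unfolding is_circuit_def r_def by auto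

lemma E_set: "E t \<in> set G" unfolding E_def r_def using r_pos r_def by simp

lemma E_F: "E t \<in> F_arcs m n" using E_set circuit unfolding is_circuit_def by auto

lemma E_mod: "E (t mod r) = E t" unfolding E_def by simp

lemma E_eq: "a mod r = b mod r \<Longrightarrow> E a = E b" unfolding E_def by simp

lemma set_G_E: "e \<in> set G \<Longrightarrow> \<exists>u<r. E u = e"
  unfolding E_def r_def by (metis in_set_conv_nth mod_less)

lemma row_data: "i \<in> {1..m} \<Longrightarrow> l i \<in> {1..n} \<and> 2 \<le> k i \<and> k i \<le> n - 1 \<and>
        (\<forall>j\<in>{1..n}. A i j \<longleftrightarrow> j \<in> circ_interval n (l i) (k i))"
  using circ unfolding circular_with_def by blast

lemma n_pos: "n > 0"
proof -
  have "E 0 \<in> F_arcs m n" by (rule E_F)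
  then show ?thesis unfolding F_arcs_def using row_data by fastforce
qed

lemma E_R: "E t = RowArc i \<Longrightarrow> i \<in> {1..m}"
  using E_F[of t] unfolding F_arcs_def by auto
lemma E_Fw: "E t = Fwd j \<Longrightarrow> j \<in> {1..n}"
  using E_F[of t] unfolding F_arcs_def by auto
lemma E_V: "E t = Rev j \<Longrightarrow> j \<in> {1..n}"
  using E_F[of t] unfolding F_arcs_def by auto

lemma hv_tv: "hv t = tv (Suc t)"
proof -
  have "t mod r < length G" using r_pos r_def by simp
  then have "arc_head n l k (G ! (t mod r)) = arc_tail n l k (G ! ((t mod r + 1) mod length G))"
    using circuit unfolding is_circuit_def by blast
  moreover have "(t mod r + 1) mod r = Suc t mod r" by (simp add: mod_Suc_eq)
  ultimately show ?thesis unfolding hv_def tv_def E_def r_def by simp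
qed

lemma tv_inj: "tv a = tv b \<Longrightarrow> a mod r = b mod r"
proof -
  assume h: "tv a = tv b"
  have d: "distinct (map (arc_tail n l k) G)" using circuit unfolding is_circuit_def by blast
  have a: "a mod r < length (map (arc_tail n l k) G)" "b mod r < length (map (arc_tail n l k) G)"
    using r_pos r_def by simp_all
  have "map (arc_tail n l k) G ! (a mod r) = map (arc_tail n l k) G ! (b mod r)"
    using h a unfolding tv_def E_def r_def by simp
  then show ?thesis using nth_eq_iff_index_eq[OF d a] by simp
qed

lemma tv_range: "tv t \<in> {1..n}" unfolding tv_def using cyc_range[OF n_pos]
  by (cases "E t") auto

lemma tvF: "E t = Fwd j \<Longrightarrow> tv t = cyc n (int j - 1)" unfolding tv_def by simp
lemma hvF: "E t = Fwd j \<Longrightarrow> hv t = j" unfolding hv_def using E_Fw cyc_id by simp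
lemma tvV: "E t = Rev j \<Longrightarrow> tv t = j" unfolding tv_def using E_V cyc_id by simp
lemma hvV: "E t = Rev j \<Longrightarrow> hv t = cyc n (int j - 1)" unfolding hv_def by simp
lemma tvR: "E t = RowArc i \<Longrightarrow> tv t = cyc n (int (l i) - 1)" unfolding tv_def by simp
lemma hvR: "E t = RowArc i \<Longrightarrow> hv t = cyc n (int (l i) + int (k i) - 1)" unfolding hv_def by simp

lemma FV_excl: assumes "Fwd j \<in> set G" "Rev j \<in> set G" shows False
proof -
  obtain a b where ab: "a < r" "b < r" "E a = Fwd j" "E b = Rev j" using assms set_G_E by metis
  have j: "j \<in> {1..n}" using E_Fw ab by blast
  have "tv b = tv (Suc a)" using hv_tv[of a] hvF[OF ab(3)] tvV[OF ab(4)] by simp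
  then have 1: "b mod r = Suc a mod r" using tv_inj by blast
  have "tv a = tv (Suc b)" using hv_tv[of b] tvF[OF ab(3)] hvV[OF ab(4)] by simp
  then have 2: "a mod r = Suc b mod r" using tv_inj by blast
  have "a \<noteq> b" using ab by auto
  have "r = 2"
  proof -
    have "b = Suc a mod r" using 1 ab by simp
    have "a = Suc b mod r" using 2 ab by simp
    show ?thesis
    proof (cases "Suc a < r")
      case True
      then have "b = Suc a" using \<open>b = Suc a mod r\<close> by simp
      then have h: "a = Suc (Suc a) mod r" using \<open>a = Suc b mod r\<close> by simp
      have "Suc (Suc a) = r"
      proof (rule ccontr)
        assume "Suc (Suc a) \<noteq> r"
        then have "Suc (Suc a) < r" using True by linarith
        then show False using h by simp
      qed
      then have "a = 0" using h by simp
      then show ?thesis using \<open>Suc (Suc a) = r\<close> by simp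
    next
      case False
      then have "Suc a = r" using ab by simp
      then have "b = 0" using \<open>b = Suc a mod r\<close> by simp
      have "r \<noteq> 1" using \<open>b = 0\<close> \<open>a \<noteq> b\<close> ab by auto
      then have "r \<ge> 2" using r_pos by linarith
      then have "a = 1" using \<open>a = Suc b mod r\<close> \<open>b = 0\<close> by simp
      then show ?thesis using \<open>Suc a = r\<close> by simp
    qed
  qed
  then have "set G = {G ! 0, G ! 1}" unfolding r_def set_conv_nth
    by (auto simp: less_2_cases_iff)
  moreover have "{G ! 0, G ! 1} = {E a, E b}"
    using ab \<open>r = 2\<close> \<open>a \<noteq> b\<close> unfolding E_def by (auto simp: less_2_cases_iff)
  ultimately show False using nondeg ab by auto
qed

lemma FV_adj: "E t = Fwd j \<Longrightarrow> \<not> isV (E (Suc t))"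
proof
  assume a: "E t = Fwd j" "isV (E (Suc t))"
  then obtain j' where b: "E (Suc t) = Rev j'" by (cases "E (Suc t)") auto
  have "j' = j" using hv_tv[of t] hvF[OF a(1)] tvV[OF b] by simp
  then show False using FV_excl E_set a b by metis
qed

lemma VF_adj: "E t = Rev j \<Longrightarrow> \<not> isF (E (Suc t))"
proof
  assume a: "E t = Rev j" "isF (E (Suc t))"
  then obtain j' where b: "E (Suc t) = Fwd j'" by (cases "E (Suc t)") auto
  have "cyc n (int j - 1) = cyc n (int j' - 1)" using hv_tv[of t] hvV[OF a(1)] tvF[OF b] by simp
  then have "(int j - 1) mod int n = (int j' - 1) mod int n" using cyc_eq_cyc n_pos by blast
  moreover have "j \<in> {1..n}" "j' \<in> {1..n}" using E_V a E_Fw b by blast+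
  ultimately have "j' = j" by (auto simp: mod_pos_pos_trivial)
  then show False using FV_excl E_set a b by metis
qed

end



lemma Suc_mod_cancel: "r > 0 \<Longrightarrow> Suc a mod r = Suc b mod r \<Longrightarrow> a mod r = b mod r"
proof -
  assume r: "r > 0" and h: "Suc a mod r = Suc b mod r"
  have "(Suc a mod r + (r - 1)) mod r = (Suc b mod r + (r - 1)) mod r" using h by simp
  then have "(Suc a + (r - 1)) mod r = (Suc b + (r - 1)) mod r" by (simp add: mod_add_left_eq)
  moreover have "Suc a + (r - 1) = a + r" "Suc b + (r - 1) = b + r" using r by simp_all
  ultimately show ?thesis by simp
qed

lemma sum_shift_periodic:
  fixes f :: "nat \<Rightarrow> int"
  assumes "f r = f 0"
  shows "(\<Sum>u<r. f (Suc u)) = (\<Sum>u<r. f u)"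
proof -
  have "(\<Sum>u<Suc r. f u) = f 0 + (\<Sum>u<r. f (Suc u))" by (rule sum.lessThan_Suc_shift)
  moreover have "(\<Sum>u<Suc r. f u) = (\<Sum>u<r. f u) + f r" by simp
  ultimately show ?thesis using assms by simp
qed

context cc begin

definition FF where "FF = row_arc_rows m G"
definition s where "s = card FF"
definition LL where "LL = essential_bullets n l k G"

lemma tv_mod: "tv (t mod r) = tv t" unfolding tv_def using E_mod by simp

lemma FF_fin: "finite FF" unfolding FF_def row_arc_rows_def by simp
lemma LL_sub: "LL \<subseteq> {1..n}" unfolding LL_def essential_bullets_def bullets_def by auto
lemma LL_fin: "finite LL" using LL_sub finite_subset by blast

lemma Fwd_in_iff: "Fwd (tv (Suc u)) \<in> set G \<longleftrightarrow> isF (E u)"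
proof
  assume "Fwd (tv (Suc u)) \<in> set G"
  then obtain w where w: "w < r" "E w = Fwd (tv (Suc u))" using set_G_E by blast
  have "tv (Suc w) = tv (Suc u)" using hv_tv[of w] hvF[OF w(2)] by simp
  then have "Suc w mod r = Suc u mod r" using tv_inj by blast
  then have "w mod r = u mod r" using Suc_mod_cancel r_pos by blast
  then have "E u = E w" using E_eq by metis
  then show "isF (E u)" using w by simp
next
  assume "isF (E u)"
  then obtain j where j: "E u = Fwd j" by (cases "E u") auto
  then have "tv (Suc u) = j" using hv_tv[of u] hvF by simp
  then show "Fwd (tv (Suc u)) \<in> set G" using E_set j by metis
qed

lemma Rev_in_iff: "Rev (tv t) \<in> set G \<longleftrightarrow> isV (E t)"
proof
  assume "Rev (tv t) \<in> set G"
  then obtain w where w: "w < r" "E w = Rev (tv t)" using set_G_E by blast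
  have "tv w = tv t" using tvV[OF w(2)] by simp
  then have "w mod r = t mod r" using tv_inj by blast
  then have "E t = E w" using E_eq by metis
  then show "isV (E t)" using w by simp
next
  assume "isV (E t)"
  then obtain j where j: "E t = Rev j" by (cases "E t") auto
  then have "tv t = j" using tvV by simp
  then show "Rev (tv t) \<in> set G" using E_set j by metis
qed

lemma nodes_eq: "circuit_nodes n l k G = tv ` {..<r}"
proof -
  have "set G = (\<lambda>u. G ! u) ` {..<length G}" by (auto simp: set_conv_nth)
  then have "set (map (arc_tail n l k) G) = (\<lambda>u. arc_tail n l k (G ! u)) ` {..<length G}" by auto
  also have "\<dots> = tv ` {..<r}" unfolding tv_def E_def r_def by (intro image_cong) auto
  finally show ?thesis unfolding circuit_nodes_def .
qed

lemma node_Suc: "u < r \<Longrightarrow> tv u = tv (Suc (u + r - 1))"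
proof -
  assume "u < r"
  have "Suc (u + r - 1) = u + r" using r_pos by simp
  then show ?thesis using tv_mod[of "u + r"] tv_mod[of u] by simp
qed

lemma LL_char: "tv (Suc u) \<in> LL \<longleftrightarrow> \<not> isF (E u) \<and> \<not> isV (E (Suc u))"
proof -
  have n: "tv (Suc u) \<in> circuit_nodes n l k G" unfolding nodes_eq
    using tv_mod[of "Suc u"] r_pos by (metis imageI lessThan_iff mod_less_divisor)
  show ?thesis unfolding LL_def essential_bullets_def bullets_def circ_set_def otimes_set_def
    using n tv_range[of "Suc u"] Fwd_in_iff[of u] Rev_in_iff[of "Suc u"] by auto
qed

lemma LL_eq: "LL = (\<lambda>u. tv (Suc u)) ` {u. u < r \<and> \<not> isF (E u) \<and> \<not> isV (E (Suc u))}"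
proof
  show "LL \<subseteq> (\<lambda>u. tv (Suc u)) ` {u. u < r \<and> \<not> isF (E u) \<and> \<not> isV (E (Suc u))}"
  proof
    fix x assume x: "x \<in> LL"
    then have "x \<in> circuit_nodes n l k G" unfolding LL_def essential_bullets_def by auto
    then obtain w where w: "w < r" "x = tv w" unfolding nodes_eq by auto
    define u where "u = (w + r - 1) mod r"
    have u: "u < r" unfolding u_def using r_pos by simp
    have "tv (Suc u) = tv w"
    proof -
      have "Suc u mod r = Suc (w + r - 1) mod r" unfolding u_def by (simp add: mod_Suc_eq)
      then show ?thesis using tv_mod node_Suc[OF w(1)] by metis
    qed
    then show "x \<in> (\<lambda>u. tv (Suc u)) ` {u. u < r \<and> \<not> isF (E u) \<and> \<not> isV (E (Suc u))}"
    proof -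
      have "\<not> isF (E u) \<and> \<not> isV (E (Suc u))" using x w LL_char[of u] \<open>tv (Suc u) = tv w\<close> by simp
      then have "u \<in> {u. u < r \<and> \<not> isF (E u) \<and> \<not> isV (E (Suc u))}" using u by simp
      then show ?thesis by (rule rev_image_eqI) (simp add: w \<open>tv (Suc u) = tv w\<close>)
    qed
  qed
next
  show "(\<lambda>u. tv (Suc u)) ` {u. u < r \<and> \<not> isF (E u) \<and> \<not> isV (E (Suc u))} \<subseteq> LL"
    using LL_char by auto
qed

lemma tvSuc_inj: "inj_on (\<lambda>u. tv (Suc u)) {..<r}"
proof (rule inj_onI)
  fix a b assume ab: "a \<in> {..<r}" "b \<in> {..<r}" "tv (Suc a) = tv (Suc b)"
  then have "Suc a mod r = Suc b mod r" using tv_inj by blast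
  then have "a mod r = b mod r" using Suc_mod_cancel r_pos by blast
  then show "a = b" using ab by simp
qed

lemma card_LL_idx: "card LL = card {u. u < r \<and> \<not> isF (E u) \<and> \<not> isV (E (Suc u))}"
  unfolding LL_eq by (rule card_image) (rule inj_on_subset[OF tvSuc_inj], auto)

end



lemma card_as_sum: "finite A \<Longrightarrow> int (card {x\<in>A. P x}) = (\<Sum>x\<in>A. if P x then 1 else 0)"
proof -
  assume f: "finite A"
  have "int (card {x\<in>A. P x}) = (\<Sum>x\<in>{x\<in>A. P x}. 1)" by simp
  also have "\<dots> = (\<Sum>x\<in>A. if P x then 1 else 0)" using sum.inter_filter[OF f, of "\<lambda>x. (1::int)" P] by simp
  finally show ?thesis .
qed

context cc begin

lemma E_r: "E r = E 0" unfolding E_def by simp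

lemma idx_count: "card {u. u < r \<and> \<not> isF (E u) \<and> \<not> isV (E (Suc u))} = card {u. u < r \<and> isR (E u)}"
proof -
  let ?b = "\<lambda>P. if P then 1 else (0::int)"
  have pw: "?b (\<not> isF (E u) \<and> \<not> isV (E (Suc u))) = ?b (isR (E u)) + ?b (isV (E u)) - ?b (isV (E (Suc u)))" for u
  proof (cases "E u")
    case (RowArc x1) then show ?thesis by simp
  next
    case (Fwd x2) then show ?thesis using FV_adj[OF Fwd] by simp
  next
    case (Rev x3) then show ?thesis by simp
  qed
  have e1: "{u. u < r \<and> \<not> isF (E u) \<and> \<not> isV (E (Suc u))} = {u\<in>{..<r}. \<not> isF (E u) \<and> \<not> isV (E (Suc u))}" by auto
  have e2: "{u. u < r \<and> isR (E u)} = {u\<in>{..<r}. isR (E u)}" by auto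
  have sh: "(\<Sum>u<r. ?b (isV (E (Suc u)))) = (\<Sum>u<r. ?b (isV (E u)))"
    by (rule sum_shift_periodic[where f = "\<lambda>u. ?b (isV (E u))"]) (simp add: E_r)
  have "int (card {u. u < r \<and> \<not> isF (E u) \<and> \<not> isV (E (Suc u))}) = (\<Sum>u<r. ?b (\<not> isF (E u) \<and> \<not> isV (E (Suc u))))"
    unfolding e1 by (rule card_as_sum) simp
  also have "\<dots> = (\<Sum>u<r. ?b (isR (E u)) + ?b (isV (E u)) - ?b (isV (E (Suc u))))" using pw by simp
  also have "\<dots> = (\<Sum>u<r. ?b (isR (E u))) + (\<Sum>u<r. ?b (isV (E u))) - (\<Sum>u<r. ?b (isV (E (Suc u))))"
    by (simp add: sum.distrib sum_subtractf)
  also have "\<dots> = (\<Sum>u<r. ?b (isR (E u)))" using sh by simp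
  also have "\<dots> = int (card {u. u < r \<and> isR (E u)})" unfolding e2 by (rule card_as_sum[symmetric]) simp
  finally show ?thesis by simp
qed

lemma row_idx_bij: "bij_betw (\<lambda>u. ridx (E u)) {u. u < r \<and> isR (E u)} FF"
proof -
  have inj: "inj_on (\<lambda>u. ridx (E u)) {u. u < r \<and> isR (E u)}"
  proof (rule inj_onI)
    fix a b assume a: "a \<in> {u. u < r \<and> isR (E u)}" and b: "b \<in> {u. u < r \<and> isR (E u)}"
      and e: "ridx (E a) = ridx (E b)"
    obtain i where i: "E a = RowArc i" using a by (cases "E a") auto
    obtain j where j: "E b = RowArc j" using b by (cases "E b") auto
    have "E a = E b" using i j e by simp
    then have "tv a = tv b" unfolding tv_def by simp
    then have "a mod r = b mod r" by (rule tv_inj)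
    then show "a = b" using a b by simp
  qed
  have img: "(\<lambda>u. ridx (E u)) ` {u. u < r \<and> isR (E u)} = FF"
  proof
    show "(\<lambda>u. ridx (E u)) ` {u. u < r \<and> isR (E u)} \<subseteq> FF"
    proof
      fix x assume "x \<in> (\<lambda>u. ridx (E u)) ` {u. u < r \<and> isR (E u)}"
      then obtain u where u: "u < r" "isR (E u)" "x = ridx (E u)" by auto
      obtain i where i: "E u = RowArc i" using u by (cases "E u") auto
      show "x \<in> FF" unfolding FF_def row_arc_rows_def using E_R[OF i] E_set[of u] i u by auto
    qed
  next
    show "FF \<subseteq> (\<lambda>u. ridx (E u)) ` {u. u < r \<and> isR (E u)}"
    proof
      fix i assume "i \<in> FF"
      then have "RowArc i \<in> set G" unfolding FF_def row_arc_rows_def by auto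
      then obtain u where u: "u < r" "E u = RowArc i" using set_G_E by blast
      then have "u \<in> {u. u < r \<and> isR (E u)}" by simp
      then show "i \<in> (\<lambda>u. ridx (E u)) ` {u. u < r \<and> isR (E u)}"
        by (rule rev_image_eqI) (simp add: u)
    qed
  qed
  show ?thesis using inj img unfolding bij_betw_def by blast
qed

lemma card_LL: "card LL = s"
  using card_LL_idx idx_count bij_betw_same_card[OF row_idx_bij] unfolding s_def by simp

end



lemma mod_step:
  fixes y n k :: int
  assumes n: "n > 0" and k: "0 \<le> k" "k < n"
  shows "(y + k) mod n - y mod n = k - n * (if y mod n + k \<ge> n then 1 else 0)"
proof -
  have a: "0 \<le> y mod n" "y mod n < n" using n by simp_all
  have e: "(y + k) mod n = (y mod n + k) mod n" by (simp add: mod_add_left_eq)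
  show ?thesis
  proof (cases "y mod n + k \<ge> n")
    case True
    have "(y mod n + k) mod n = (y mod n + k - n) mod n" by (simp add: mod_diff_right_eq[symmetric])
    also have "\<dots> = y mod n + k - n" by (intro mod_pos_pos_trivial; insert True a k; linarith)
    finally show ?thesis using e True by simp
  next
    case False
    have "(y mod n + k) mod n = y mod n + k" using False a k by (intro mod_pos_pos_trivial) auto
    then show ?thesis using e False by simp
  qed
qed

lemma neg_mod: fixes y n :: int assumes n: "n > 0" shows "(-1 - y) mod n = n - 1 - y mod n"
proof -
  have a: "0 \<le> y mod n" "y mod n < n" using n by simp_all
  have "(-1 - y) mod n = (n - 1 - y mod n) mod n"
  proof -
    have "(-1 - y) mod n = (-1 - y mod n) mod n" by (simp add: mod_diff_right_eq)
    also have "\<dots> = (-1 - y mod n + n) mod n" by simp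
    finally show ?thesis by (simp add: algebra_simps)
  qed
  also have "\<dots> = n - 1 - y mod n" using a by (intro mod_pos_pos_trivial) auto
  finally show ?thesis .
qed

lemma small_mod0: fixes x n :: int assumes "x mod n = 0" "-n < x" "x < n" shows "x = 0"
proof (rule ccontr)
  assume x: "x \<noteq> 0"
  have d: "n dvd x" using assms(1) by auto
  have np: "n > 0" using assms by linarith
  show False
  proof (cases "x > 0")
    case True then show False using zdvd_imp_le[OF d True] assms by linarith
  next
    case False
    then have "-x > 0" using x by linarith
    moreover have "n dvd -x" using d by simp
    ultimately show False using zdvd_imp_le assms by fastforce
  qed
qed

lemma wrap_iff: assumes j: "j \<in> {1..n}" and c: "c \<in> {1..n}"
  shows "(int j - 1 - int c) mod int n + 1 \<ge> int n \<longleftrightarrow> j = c"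
proof
  let ?y = "int j - 1 - int c"
  have n_pos: "n > 0" using j by auto
  assume a: "?y mod int n + 1 \<ge> int n"
  have "?y mod int n < int n" using n_pos by simp
  then have "?y mod int n = int n - 1" using a by linarith
  then have "(?y mod int n + 1) mod int n = 0" by simp
  then have "(?y + 1) mod int n = 0" by (simp add: mod_add_left_eq)
  then have "(int j - int c) mod int n = 0" by simp
  moreover have "-int n < int j - int c" "int j - int c < int n" using j c by auto
  ultimately have "int j - int c = 0" by (rule small_mod0)
  then show "j = c" by simp
next
  assume "j = c"
  then have "int j - 1 - int c = -1" by simp
  moreover have "n > 0" using j by auto
  ultimately show "(int j - 1 - int c) mod int n + 1 \<ge> int n" using neg_mod[of "int n" 0] by simp
qed

context cc begin

definition cov :: "arc \<Rightarrow> nat \<Rightarrow> int" where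
  "cov e c = (case e of RowArc i \<Rightarrow> if A i c then 1 else 0
      | Fwd j \<Rightarrow> if j = c then 1 else 0 | Rev j \<Rightarrow> if j = c then -1 else 0)"

definition dl :: "nat \<Rightarrow> nat \<Rightarrow> int" where "dl a c = (int c - int a) mod int n"

lemma A_iff: "i \<in> {1..m} \<Longrightarrow> c \<in> {1..n} \<Longrightarrow> A i c \<longleftrightarrow> dl (l i) c < int (k i)"
  using row_data[of i] circ_interval_iff[OF n_pos] unfolding dl_def by blast

lemma dcyc: "(int (cyc n x) - int c) mod int n = (x - int c) mod int n"
  using cyc_mod[OF n_pos, of x] by (metis mod_diff_left_eq)

lemma arc_step:
  assumes c: "c \<in> {1..n}"
  shows "(int (hv u) - int c) mod int n - (int (tv u) - int c) mod int n
         = arc_length k (E u) - int n * cov (E u) c"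
proof (cases "E u")
  case (RowArc i)
  have i: "i \<in> {1..m}" using E_R[OF RowArc] .
  have kk: "2 \<le> k i" "k i \<le> n - 1" using row_data[OF i] by auto
  let ?y = "int (l i) - 1 - int c"
  have h: "(int (hv u) - int c) mod int n = (?y + int (k i)) mod int n"
    unfolding hvR[OF RowArc] dcyc by (simp add: algebra_simps)
  have t: "(int (tv u) - int c) mod int n = ?y mod int n"
    unfolding tvR[OF RowArc] dcyc by (simp add: algebra_simps)
  have st: "(?y + int (k i)) mod int n - ?y mod int n = int (k i) - int n * (if ?y mod int n + int (k i) \<ge> int n then 1 else 0)"
    using kk n_pos by (intro mod_step) auto
  have "dl (l i) c = int n - 1 - ?y mod int n"
    unfolding dl_def using neg_mod[of "int n" ?y] n_pos by (simp add: algebra_simps)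
  then have "A i c \<longleftrightarrow> ?y mod int n + int (k i) \<ge> int n" using A_iff[OF i c] by linarith
  then show ?thesis unfolding h t st using RowArc cov_def by simp
next
  case (Fwd j)
  have j: "j \<in> {1..n}" using E_Fw[OF Fwd] .
  let ?y = "int j - 1 - int c"
  have h: "(int (hv u) - int c) mod int n = (?y + 1) mod int n"
    unfolding hvF[OF Fwd] by (simp add: algebra_simps)
  have t: "(int (tv u) - int c) mod int n = ?y mod int n"
    unfolding tvF[OF Fwd] dcyc by (simp add: algebra_simps)
  have st: "(?y + 1) mod int n - ?y mod int n = 1 - int n * (if ?y mod int n + 1 \<ge> int n then 1 else 0)"
    using n_pos mod_step[of "int n" 1 ?y] by (cases "n = 1") auto
  have "?y mod int n + 1 \<ge> int n \<longleftrightarrow> j = c" using wrap_iff[OF j c] .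
  then show ?thesis unfolding h t st using Fwd cov_def by simp
next
  case (Rev j)
  have j: "j \<in> {1..n}" using E_V[OF Rev] .
  let ?y = "int j - 1 - int c"
  have t: "(int (tv u) - int c) mod int n = (?y + 1) mod int n"
    unfolding tvV[OF Rev] by (simp add: algebra_simps)
  have h: "(int (hv u) - int c) mod int n = ?y mod int n"
    unfolding hvV[OF Rev] dcyc by (simp add: algebra_simps)
  have st: "(?y + 1) mod int n - ?y mod int n = 1 - int n * (if ?y mod int n + 1 \<ge> int n then 1 else 0)"
    using n_pos mod_step[of "int n" 1 ?y] by (cases "n = 1") auto
  have "?y mod int n + 1 \<ge> int n \<longleftrightarrow> j = c" using wrap_iff[OF j c] .
  then have "(?y + 1) mod int n - ?y mod int n = 1 - int n * (if j = c then 1 else 0)" using st by simp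
  then have "?y mod int n - (?y + 1) mod int n = -1 + int n * (if j = c then 1 else 0)" by linarith
  then show ?thesis unfolding h t using Rev by (simp add: cov_def)
qed

end



context cc begin

lemma factW: assumes c: "c \<in> {1..n}" shows "(\<Sum>u<r. cov (E u) c) = p"
proof -
  let ?f = "\<lambda>u. (int (tv u) - int c) mod int n"
  have z: "(\<Sum>u<r. ?f (Suc u) - ?f u) = 0"
  proof -
    have "tv r = tv 0" using tv_mod[of r] by simp
    then have "(\<Sum>u<r. ?f (Suc u)) = (\<Sum>u<r. ?f u)"
      by (intro sum_shift_periodic) simp
    then show ?thesis by (simp add: sum_subtractf)
  qed
  have w: "(\<Sum>u<r. arc_length k (E u)) = p * int n"
  proof -
    have "sum_list (map (arc_length k) G) = p * int n" using wind unfolding winding_number_def .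
    moreover have "sum_list (map (arc_length k) G) = (\<Sum>u<r. arc_length k (E u))"
      unfolding sum_list_sum_nth r_def E_def by (simp add: atLeast0LessThan)
    ultimately show ?thesis by simp
  qed
  have "(\<Sum>u<r. ?f (Suc u) - ?f u) = (\<Sum>u<r. arc_length k (E u) - int n * cov (E u) c)"
  proof (rule sum.cong)
    fix u assume "u \<in> {..<r}"
    show "?f (Suc u) - ?f u = arc_length k (E u) - int n * cov (E u) c"
      using arc_step[OF c, of u] unfolding hv_tv .
  qed simp
  also have "\<dots> = p * int n - int n * (\<Sum>u<r. cov (E u) c)"
    using w by (simp add: sum_subtractf sum_distrib_left)
  finally have "int n * (\<Sum>u<r. cov (E u) c) = int n * p" using z by (simp add: algebra_simps)
  then show ?thesis using n_pos by simp
qed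

lemma count_bullet: assumes c: "c \<in> LL" shows "int (card {i \<in> FF. A i c}) = p"
proof -
  have nF: "Fwd c \<notin> set G" and nV: "Rev c \<notin> set G" and c1: "c \<in> {1..n}"
    using c unfolding LL_def essential_bullets_def bullets_def circ_set_def otimes_set_def by auto
  have cv: "cov (E u) c = (if isR (E u) \<and> A (ridx (E u)) c then 1 else 0)" for u
  proof (cases "E u")
    case (RowArc x1) then show ?thesis by (simp add: cov_def)
  next
    case (Fwd x2) then show ?thesis using nF E_set[of u] by (auto simp: cov_def)
  next
    case (Rev x3) then show ?thesis using nV E_set[of u] by (auto simp: cov_def)
  qed
  have "p = (\<Sum>u<r. if isR (E u) \<and> A (ridx (E u)) c then 1 else 0)"
    using factW[OF c1] cv by simp
  also have "\<dots> = int (card {u\<in>{..<r}. isR (E u) \<and> A (ridx (E u)) c})"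
    by (rule card_as_sum[symmetric]) simp
  also have "card {u\<in>{..<r}. isR (E u) \<and> A (ridx (E u)) c} = card {i \<in> FF. A i c}"
  proof -
    have b: "inj_on (\<lambda>u. ridx (E u)) {u. u < r \<and> isR (E u)}"
       "(\<lambda>u. ridx (E u)) ` {u. u < r \<and> isR (E u)} = FF"
      using row_idx_bij unfolding bij_betw_def by auto
    have sub: "{u\<in>{..<r}. isR (E u) \<and> A (ridx (E u)) c} \<subseteq> {u. u < r \<and> isR (E u)}" by auto
    have "(\<lambda>u. ridx (E u)) ` {u\<in>{..<r}. isR (E u) \<and> A (ridx (E u)) c} = {i \<in> FF. A i c}"
    proof
      show "(\<lambda>u. ridx (E u)) ` {u \<in> {..<r}. isR (E u) \<and> A (ridx (E u)) c} \<subseteq> {i \<in> FF. A i c}"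
        using b(2) by blast
      show "{i \<in> FF. A i c} \<subseteq> (\<lambda>u. ridx (E u)) ` {u \<in> {..<r}. isR (E u) \<and> A (ridx (E u)) c}"
      proof
        fix i assume i: "i \<in> {i \<in> FF. A i c}"
        then obtain u where u: "u < r" "isR (E u)" "i = ridx (E u)" using b(2) by (metis (no_types, lifting) imageE mem_Collect_eq)
        then have "u \<in> {u \<in> {..<r}. isR (E u) \<and> A (ridx (E u)) c}" using i by simp
        then show "i \<in> (\<lambda>u. ridx (E u)) ` {u \<in> {..<r}. isR (E u) \<and> A (ridx (E u)) c}"
          by (rule rev_image_eqI) (simp add: u)
      qed
    qed
    moreover have "inj_on (\<lambda>u. ridx (E u)) {u\<in>{..<r}. isR (E u) \<and> A (ridx (E u)) c}"
      using inj_on_subset[OF b(1) sub] .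
    ultimately show ?thesis using card_image by fastforce
  qed
  finally show ?thesis by simp
qed

end



context cc begin

lemma dl_range: "0 \<le> dl a c" "dl a c < int n" unfolding dl_def using n_pos by simp_all

lemma dl_self: "dl a a = 0" unfolding dl_def by simp

lemma dl_inj: assumes "b \<in> {1..n}" "c \<in> {1..n}" "dl a b = dl a c" shows "b = c"
proof -
  have "(int b - int a) mod int n = (int c - int a) mod int n" using assms(3) unfolding dl_def .
  then have "(int b - int a + int a) mod int n = (int c - int a + int a) mod int n"
    by (metis mod_add_left_eq)
  then have "int b mod int n = int c mod int n" by simp
  then show ?thesis using cyc_eq_cyc[OF n_pos, of "int b" "int c"] cyc_id assms(1,2) by simp
qed

lemma dl_shift: "dl a y = (dl b y - dl b a) mod int n"
proof -
  have "(int y - int a) = (int y - int b) - (int a - int b)" by simp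
  then show ?thesis unfolding dl_def by (metis mod_diff_eq)
qed

lemma dl_add: "dl a y = (dl a b + dl b y) mod int n"
proof -
  have "(int y - int a) = (int b - int a) + (int y - int b)" by simp
  then show ?thesis unfolding dl_def by (metis mod_add_eq)
qed

lemma dl_cyc: "dl a (cyc n x) = (x - int a) mod int n"
  unfolding dl_def using dcyc[of x a] .

lemma mod_small: "0 \<le> x \<Longrightarrow> x < int n \<Longrightarrow> x mod int n = x" by (simp add: mod_pos_pos_trivial)

lemma dl_zero: "a \<in> {1..n} \<Longrightarrow> c \<in> {1..n} \<Longrightarrow> dl a c = 0 \<longleftrightarrow> a = c"
  using dl_inj[of a c a] dl_self by auto

lemma cyc_succ: "j \<in> {1..n} \<Longrightarrow> cyc n (int j - 1) = cyc n x \<Longrightarrow> j = cyc n (x + 1)"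
proof -
  assume j: "j \<in> {1..n}" and h: "cyc n (int j - 1) = cyc n x"
  have "(int j - 1) mod int n = x mod int n" using h cyc_eq_cyc[OF n_pos] by blast
  then have "(int j - 1 + 1) mod int n = (x + 1) mod int n" by (metis mod_add_left_eq)
  then show ?thesis using cyc_eq_iff[OF n_pos j, of "x+1"] by simp
qed

lemma cyc_pred: "j \<in> {1..n} \<Longrightarrow> j = cyc n x \<Longrightarrow> cyc n (int j - 1) = cyc n (x - 1)"
proof -
  assume j: "j \<in> {1..n}" and h: "j = cyc n x"
  have "int j mod int n = x mod int n" using h cyc_mod[OF n_pos] by simp
  then have "(int j - 1) mod int n = (x - 1) mod int n" by (metis mod_diff_left_eq)
  then show ?thesis using cyc_eq_cyc[OF n_pos] by blast
qed

lemma runF: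
  assumes "\<forall>q'<q. isF (E (w + q'))"
  shows "q' \<le> q \<Longrightarrow> tv (w + q') = cyc n (int (tv w) + int q')"
proof (induction q')
  case 0 then show ?case using cyc_id tv_range by simp
next
  case (Suc q')
  then have "isF (E (w + q'))" using assms by simp
  then obtain j where j: "E (w + q') = Fwd j" by (cases "E (w + q')") auto
  have "cyc n (int j - 1) = cyc n (int (tv w) + int q')" using tvF[OF j] Suc by simp
  then have "j = cyc n (int (tv w) + int q' + 1)" using cyc_succ E_Fw[OF j] by blast
  then show ?case using hv_tv[of "w + q'"] hvF[OF j] by (simp add: add_ac)
qed

lemma runF_in:
  assumes "\<forall>q'<q. isF (E (w + q'))" "q' < q"
  shows "Fwd (cyc n (int (tv w) + int q' + 1)) \<in> set G"
proof -
  obtain j where j: "E (w + q') = Fwd j" using assms by (cases "E (w + q')") auto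
  have "cyc n (int j - 1) = cyc n (int (tv w) + int q')" using tvF[OF j] runF[OF assms(1), of q'] assms(2) by simp
  then have "j = cyc n (int (tv w) + int q' + 1)" using cyc_succ E_Fw[OF j] by blast
  then show ?thesis using E_set j by metis
qed

lemma runV:
  assumes "\<forall>q'<q. isV (E (w + q'))"
  shows "q' \<le> q \<Longrightarrow> tv (w + q') = cyc n (int (tv w) - int q')"
proof (induction q')
  case 0 then show ?case using cyc_id tv_range by simp
next
  case (Suc q')
  then have "isV (E (w + q'))" using assms by simp
  then obtain j where j: "E (w + q') = Rev j" by (cases "E (w + q')") auto
  have "j = cyc n (int (tv w) - int q')" using tvV[OF j] Suc by simp
  then have "cyc n (int j - 1) = cyc n (int (tv w) - int q' - 1)" using cyc_pred E_V[OF j] by blast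
  then show ?case using hv_tv[of "w + q'"] hvV[OF j] by (simp add: algebra_simps)
qed

lemma nonR_F:
  assumes "isF (E w)" "\<forall>q'<q. \<not> isR (E (w + q'))"
  shows "q' < q \<Longrightarrow> isF (E (w + q'))"
proof (induction q')
  case 0 then show ?case using assms by simp
next
  case (Suc q')
  then have "isF (E (w + q'))" by simp
  then obtain j where "E (w + q') = Fwd j" by (cases "E (w + q')") auto
  then have "\<not> isV (E (Suc (w + q')))" by (rule FV_adj)
  moreover have "\<not> isR (E (w + Suc q'))" using assms(2) Suc.prems by blast
  ultimately show ?case using arc_cases3[of "E (w + Suc q')"] by simp
qed

lemma nonR_V:
  assumes "isV (E w)" "\<forall>q'<q. \<not> isR (E (w + q'))"
  shows "q' < q \<Longrightarrow> isV (E (w + q'))"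
proof (induction q')
  case 0 then show ?case using assms by simp
next
  case (Suc q')
  then have "isV (E (w + q'))" by simp
  then obtain j where "E (w + q') = Rev j" by (cases "E (w + q')") auto
  then have "\<not> isF (E (Suc (w + q')))" by (rule VF_adj)
  moreover have "\<not> isR (E (w + Suc q'))" using assms(2) Suc.prems by blast
  ultimately show ?case using arc_cases3[of "E (w + Suc q')"] by simp
qed

definition GP where "GP c j \<longleftrightarrow> (\<forall>c'\<in>LL. dl (l j) c' \<le> dl (l j) c)"

lemma LL_notF: "Fwd c \<in> set G \<Longrightarrow> c \<notin> LL"
  unfolding LL_def essential_bullets_def bullets_def circ_set_def using E_F
  by (auto dest!: set_G_E simp: E_Fw)

lemma LL_notV: "Rev c \<in> set G \<Longrightarrow> c \<notin> LL"
  unfolding LL_def essential_bullets_def bullets_def otimes_set_def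
  by (auto dest!: set_G_E simp: E_V)

lemma Frun_GP:
  assumes c: "tv w \<in> LL" and F: "\<forall>q'<q. isF (E (w + q'))" and R: "E (w + q) = RowArc j"
  shows "j \<in> FF \<and> GP (tv w) j"
proof
  show "j \<in> FF" unfolding FF_def row_arc_rows_def using E_R[OF R] E_set[of "w+q"] R by auto
  let ?c = "tv w"
  have nl: "cyc n (int ?c + int q'') \<notin> LL" if "1 \<le> q''" "q'' \<le> q" for q''
  proof -
    have "Fwd (cyc n (int ?c + int (q'' - 1) + 1)) \<in> set G" using runF_in[OF F, of "q'' - 1"] that by simp
    moreover have "int (q'' - 1) + 1 = int q''" using that by simp
    ultimately show ?thesis using LL_notF by (simp add: add.assoc)
  qed
  have qn: "q < n"
  proof (rule ccontr)
    assume "\<not> q < n"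
    then have "cyc n (int ?c + int n) \<notin> LL" using nl[of n] n_pos by simp
    moreover have "cyc n (int ?c + int n) = ?c" using cyc_eq_iff[OF n_pos tv_range, of "int ?c + int n"] by simp
    ultimately show False using c by simp
  qed
  have j: "j \<in> {1..m}" using E_R[OF R] .
  have lj: "l j \<in> {1..n}" using row_data[OF j] by simp
  have "cyc n (int (l j) - 1) = cyc n (int ?c + int q)" using tvR[OF R] runF[OF F, of q] by simp
  then have ljc: "l j = cyc n (int ?c + int q + 1)" using cyc_succ[OF lj] by simp
  have dlj: "dl (l j) y = (dl ?c y - (int q + 1)) mod int n" for y
  proof -
    have "dl ?c (l j) = (int q + 1) mod int n" unfolding ljc dl_cyc by simp
    then show ?thesis using dl_shift[of "l j" y ?c] by (simp add: mod_diff_right_eq)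
  qed
  show "GP ?c j" unfolding GP_def
  proof
    fix c' assume c': "c' \<in> LL"
    have c'n: "c' \<in> {1..n}" using c' LL_sub by auto
    have r1: "dl (l j) ?c = int n - (int q + 1)"
    proof -
      have e: "(- int q - 1 + int n) mod int n = (- int q - 1) mod int n" by (rule mod_add_self2)
      have "(int n - (int q + 1)) mod int n = int n - (int q + 1)" using qn by (intro mod_small) auto
      then show ?thesis unfolding dlj dl_self using e by (simp add: algebra_simps)
    qed
    show "dl (l j) c' \<le> dl (l j) ?c"
    proof (cases "c' = ?c")
      case True then show ?thesis by simp
    next
      case False
      let ?d = "dl ?c c'"
      have d0: "?d \<noteq> 0" using False dl_zero[OF tv_range c'n] by simp
      have dr: "0 \<le> ?d" "?d < int n" using dl_range by auto
      have "c' = cyc n (int ?c + ?d)"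
      proof -
        have "(int ?c + ?d) mod int n = int c' mod int n" unfolding dl_def
          by (metis add.commute diff_add_cancel mod_add_left_eq)
        then show ?thesis using cyc_eq_iff[OF n_pos c'n, of "int ?c + ?d"] by simp
      qed
      then have "\<not> (1 \<le> nat ?d \<and> nat ?d \<le> q)" using nl[of "nat ?d"] c' dr by auto
      then have "?d \<ge> int q + 1" using d0 dr by linarith
      then have "dl (l j) c' = ?d - (int q + 1)" unfolding dlj using dr by (simp add: mod_small)
      then show ?thesis using r1 dr by simp
    qed
  qed
qed

end



context cc begin

lemma FF_sub: "FF \<subseteq> {1..m}" unfolding FF_def row_arc_rows_def by auto

lemma FF_ne_row: "FF \<noteq> {} \<Longrightarrow> \<exists>u0<r. isR (E u0)"
  using row_idx_bij unfolding bij_betw_def by auto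

lemma exists_row_after: assumes "FF \<noteq> {}" shows "\<exists>q. isR (E (w + q))"
proof -
  obtain u0 where u0: "u0 < r" "isR (E u0)" using FF_ne_row[OF assms] by blast
  have "(w + (r - w mod r + u0)) mod r = u0"
  proof -
    have "w + (r - w mod r + u0) = (w div r) * r + r + u0"
      using div_mult_mod_eq[of w r] mod_less_divisor[OF r_pos, of w] by linarith
    also have "\<dots> = u0 + (w div r + 1) * r" by (simp add: algebra_simps)
    finally have e: "w + (r - w mod r + u0) = u0 + (w div r + 1) * r" .
    show ?thesis unfolding e mod_mult_self1 using u0 by simp
  qed
  then have "E (w + (r - w mod r + u0)) = E u0" using E_eq[of "w + (r - w mod r + u0)" u0] u0 by simp
  then show ?thesis using u0 by (intro exI[of _ "r - w mod r + u0"]) simp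
qed

lemma lemma_T: assumes ne: "FF \<noteq> {}" and c: "c \<in> LL" shows "\<exists>j. j \<in> FF \<and> GP c j"
proof -
  obtain u where u: "u < r" "\<not> isF (E u)" "\<not> isV (E (Suc u))" "c = tv (Suc u)"
    using c unfolding LL_eq by auto
  define w where "w = Suc u"
  define q where "q = (LEAST q. isR (E (w + q)))"
  have qR: "isR (E (w + q))" unfolding q_def using exists_row_after[OF ne, of w] by (rule LeastI_ex)
  have qmin: "\<forall>q'<q. \<not> isR (E (w + q'))" unfolding q_def using not_less_Least by blast
  obtain j where j: "E (w + q) = RowArc j" using qR by (cases "E (w + q)") auto
  have cw: "tv w \<in> LL" using c u w_def by simp
  show ?thesis
  proof (cases "q = 0")
    case True
    then have "\<forall>q'<q. isF (E (w + q'))" by simp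
    then show ?thesis using Frun_GP[OF cw _ j] u w_def by auto
  next
    case False
    then have "0 < q" by simp
    then have "\<not> isR (E (w + 0))" using qmin by blast
    then have "\<not> isR (E w)" by simp
    then have "isF (E w)" using u(3) w_def arc_cases3[of "E w"] by auto
    then have "\<forall>q'<q. isF (E (w + q'))" using nonR_F[OF _ qmin] by blast
    then show ?thesis using Frun_GP[OF cw _ j] u w_def by auto
  qed
qed

definition g where "g c = (SOME j. j \<in> FF \<and> GP c j)"

lemma g_prop: "FF \<noteq> {} \<Longrightarrow> c \<in> LL \<Longrightarrow> g c \<in> FF \<and> GP c (g c)"
proof -
  assume "FF \<noteq> {}" "c \<in> LL"
  then have "\<exists>j. j \<in> FF \<and> GP c j" by (rule lemma_T)
  then show ?thesis unfolding g_def by (rule someI_ex)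
qed

lemma GP_inj: assumes "c1 \<in> LL" "c2 \<in> LL" "GP c1 j" "GP c2 j" shows "c1 = c2"
proof -
  have "dl (l j) c1 = dl (l j) c2" using assms unfolding GP_def by (intro order_antisym) auto
  then show ?thesis using dl_inj LL_sub assms(1,2) by blast
qed

lemma g_bij: assumes ne: "FF \<noteq> {}" shows "bij_betw g LL FF"
proof -
  have inj: "inj_on g LL"
  proof (rule inj_onI)
    fix a b assume "a \<in> LL" "b \<in> LL" "g a = g b"
    then show "a = b" using g_prop[OF ne, of a] g_prop[OF ne, of b] GP_inj[of a b "g a"] by simp
  qed
  have sub: "g ` LL \<subseteq> FF" using g_prop[OF ne] by auto
  have "card (g ` LL) = card FF" using card_image[OF inj] card_LL unfolding s_def by simp
  then have "g ` LL = FF" using card_subset_eq[OF FF_fin sub] by simp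
  then show ?thesis using inj unfolding bij_betw_def by simp
qed

end



context cc begin

lemma p_nonneg: assumes ne: "FF \<noteq> {}" shows "p \<ge> 0"
proof -
  have "card LL > 0" using card_LL ne FF_fin unfolding s_def by auto
  then have "LL \<noteq> {}" by auto
  then obtain c where "c \<in> LL" by blast
  then show ?thesis using count_bullet by fastforce
qed

lemma row_bound: assumes i: "i \<in> FF" shows "int (card {c\<in>LL. A i c}) \<le> p"
proof -
  have ne: "FF \<noteq> {}" using i by auto
  let ?C = "{c\<in>LL. A i c}"
  have fC: "finite ?C" using LL_fin by simp
  show ?thesis
  proof (cases "?C = {}")
    case True
    have "card ?C = 0" unfolding True by simp
    then show ?thesis using p_nonneg[OF ne] by simp
  next
    case False
    let ?f = "\<lambda>c. dl (l i) c"
    have "Max (?f ` ?C) \<in> ?f ` ?C" using fC False by (intro Max_in) auto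
    then obtain cd where cd: "cd \<in> ?C" "?f cd = Max (?f ` ?C)" by (rule imageE) simp
    have cdmax: "\<forall>c\<in>?C. ?f c \<le> ?f cd" using cd fC by simp
    have i1: "i \<in> {1..m}" using i FF_sub by auto
    have li: "l i \<in> {1..n}" using row_data[OF i1] by simp
    have key: "g c \<noteq> i \<and> A (g c) cd" if c: "c \<in> ?C - {cd}" for c
    proof -
      have cL: "c \<in> LL" using c by simp
      have cn: "c \<in> {1..n}" "cd \<in> {1..n}" using c cd LL_sub by auto
      let ?e = "?f c" and ?D = "?f cd"
      have eD: "?e < ?D"
      proof -
        have "?e \<le> ?D" using cdmax c by simp
        moreover have "?e \<noteq> ?D" using dl_inj[OF cn] c by auto
        ultimately show ?thesis by simp
      qed
      define j where "j = g c"
      have j: "j \<in> FF" "GP c j" using g_prop[OF ne cL] j_def by auto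
      let ?d = "dl (l i) (l j)"
      have sh: "dl (l j) y = (dl (l i) y - ?d) mod int n" for y by (rule dl_shift)
      have gp: "dl (l j) cd \<le> dl (l j) c" using j(2) cd unfolding GP_def by simp
      have r1: "0 \<le> ?e" "?D < int n" "0 \<le> ?d" "?d < int n" using dl_range by auto
      have dd: "?e < ?d \<and> ?d \<le> ?D"
      proof (rule ccontr)
        assume "\<not> (?e < ?d \<and> ?d \<le> ?D)"
        then consider "?d \<le> ?e" | "?D < ?d" by linarith
        then show False
        proof cases
          case 1
          then have "dl (l j) cd = ?D - ?d" "dl (l j) c = ?e - ?d" unfolding sh using r1 eD
            by (auto intro!: mod_small)
          then show False using gp eD by simp
        next
          case 2
          have a: "(?D - ?d + int n) mod int n = ?D - ?d + int n" using r1 2 eD by (intro mod_small) auto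
          have b: "(?e - ?d + int n) mod int n = ?e - ?d + int n" using r1 2 eD by (intro mod_small) auto
          have "dl (l j) cd = ?D - ?d + int n" "dl (l j) c = ?e - ?d + int n"
            unfolding sh using a b by simp_all
          then show False using gp eD by simp
        qed
      qed
      have jn: "j \<noteq> i" using dd r1 dl_self[of "l i"] by auto
      have j1: "j \<in> {1..m}" using j FF_sub by auto
      have "A j cd"
      proof (rule ccontr)
        assume nA: "\<not> A j cd"
        have "dl (l j) cd = ?D - ?d" unfolding sh using r1 dd by (auto intro!: mod_small)
        then have kj: "int (k j) \<le> ?D - ?d" using nA A_iff[OF j1 cn(2)] by simp
        have kD: "?D < int (k i)" using cd A_iff[OF i1 cn(2)] by simp
        have "dominates n A i j" unfolding dominates_def
        proof (intro ballI impI)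
          fix x assume x: "x \<in> {1..n}" "A j x"
          have "dl (l j) x < int (k j)" using x A_iff[OF j1] by simp
          moreover have "dl (l i) x = (?d + dl (l j) x) mod int n" by (rule dl_add)
          moreover have "0 \<le> dl (l j) x" using dl_range by simp
          ultimately have "dl (l i) x = ?d + dl (l j) x" using kj r1 dd by (auto intro!: mod_small)
          then have "dl (l i) x < int (k i)" using kj kD \<open>dl (l j) x < int (k j)\<close> by linarith
          then show "A i x" using A_iff[OF i1 x(1)] by simp
        qed
        moreover have "\<not> dominates n A i j"
          using nodom i1 j1 jn unfolding no_dominating_rows_def by (simp only: Ball_def) simp
        ultimately show False by simp
      qed
      then show ?thesis using jn j_def by simp
    qed
    have inj: "inj_on g (?C - {cd})"
    proof -
      have "inj_on g LL" using g_bij[OF ne] unfolding bij_betw_def by simp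
      moreover have "?C - {cd} \<subseteq> LL" by auto
      ultimately show ?thesis by (rule inj_on_subset)
    qed
    have sub: "g ` (?C - {cd}) \<subseteq> {j\<in>FF. A j cd} - {i}"
      using key g_prop[OF ne] by auto
    have "card (?C - {cd}) \<le> card ({j\<in>FF. A j cd} - {i})"
      using card_inj_on_le[OF inj sub] FF_fin by simp
    moreover have "card (?C - {cd}) = card ?C - 1" using cd fC by simp
    moreover have "card ({j\<in>FF. A j cd} - {i}) = card {j\<in>FF. A j cd} - 1" using i cd FF_fin by simp
    moreover have "int (card {j\<in>FF. A j cd}) = p" using count_bullet cd by simp
    moreover have "card ?C \<ge> 1" using cd fC card_gt_0_iff[of ?C] by fastforce
    moreover have "card {j\<in>FF. A j cd} \<ge> 1" using i cd FF_fin card_gt_0_iff[of "{j\<in>FF. A j cd}"] by fastforce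
    ultimately show ?thesis by linarith
  qed
qed

end



lemma bij_by_card: "inj_on f A \<Longrightarrow> f ` A \<subseteq> B \<Longrightarrow> card A = card B \<Longrightarrow> finite B \<Longrightarrow> bij_betw f A B"
  by (metis bij_betw_def card_image card_subset_eq)

context cc begin

lemma row_exact: assumes i: "i \<in> FF" shows "int (card {c\<in>LL. A i c}) = p"
proof -
  let ?b = "\<lambda>P. if P then 1 else (0::int)"
  have "(\<Sum>i\<in>FF. int (card {c\<in>LL. A i c})) = (\<Sum>i\<in>FF. \<Sum>c\<in>LL. ?b (A i c))"
    using card_as_sum[OF LL_fin] by simp
  also have "\<dots> = (\<Sum>c\<in>LL. \<Sum>i\<in>FF. ?b (A i c))" by (rule sum.swap)
  also have "\<dots> = (\<Sum>c\<in>LL. int (card {i\<in>FF. A i c}))" using card_as_sum[OF FF_fin] by simp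
  also have "\<dots> = (\<Sum>c\<in>LL. p)" using count_bullet by simp
  also have "\<dots> = (\<Sum>i\<in>FF. p)" using card_LL unfolding s_def by simp
  finally have e: "(\<Sum>i\<in>FF. p - int (card {c\<in>LL. A i c})) = 0" by (simp add: sum_subtractf)
  have "\<forall>i\<in>FF. p - int (card {c\<in>LL. A i c}) = 0"
    using sum_nonneg_eq_0_iff[OF FF_fin, of "\<lambda>i. p - int (card {c\<in>LL. A i c})"] e row_bound by simp
  then show ?thesis using i by simp
qed

definition rf where "rf a b = card {c\<in>LL. dl a c < dl a b}"

lemma R1: assumes i: "i \<in> FF" and b: "b \<in> LL" shows "A i b \<longleftrightarrow> int (rf (l i) b) < p"
proof -
  have i1: "i \<in> {1..m}" using i FF_sub by auto
  have C: "{c\<in>LL. A i c} = {c\<in>LL. dl (l i) c < int (k i)}" using A_iff[OF i1] LL_sub by auto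
  have bn: "b \<in> {1..n}" using b LL_sub by auto
  show ?thesis
  proof
    assume Ab: "A i b"
    have "{c\<in>LL. dl (l i) c < dl (l i) b} \<subset> {c\<in>LL. A i c}"
      using Ab A_iff[OF i1 bn] b unfolding C by auto
    then have "rf (l i) b < card {c\<in>LL. A i c}" unfolding rf_def
      by (rule psubset_card_mono[rotated]) (simp add: LL_fin)
    then show "int (rf (l i) b) < p" using row_exact[OF i] by simp
  next
    assume h: "int (rf (l i) b) < p"
    show "A i b"
    proof (rule ccontr)
      assume nA: "\<not> A i b"
      have "{c\<in>LL. A i c} \<subseteq> {c\<in>LL. dl (l i) c < dl (l i) b}"
        using nA A_iff[OF i1 bn] unfolding C by auto
      then have "card {c\<in>LL. A i c} \<le> rf (l i) b" unfolding rf_def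
        by (rule card_mono[rotated]) (simp add: LL_fin)
      then show False using h row_exact[OF i] by simp
    qed
  qed
qed

definition rho where "rho b = card {c\<in>LL. c < b}"

lemma dl_nat: assumes "a \<in> {1..n}" "c \<in> {1..n}"
  shows "dl a c = (if a \<le> c then int c - int a else int c - int a + int n)"
proof (cases "a \<le> c")
  case True then show ?thesis unfolding dl_def using assms by (auto intro!: mod_small)
next
  case False
  have "(int c - int a + int n) mod int n = int c - int a + int n" using assms False by (intro mod_small) auto
  then show ?thesis unfolding dl_def using False by simp
qed

lemma rf_lt: "b \<in> LL \<Longrightarrow> rf a b < s"
proof -
  assume b: "b \<in> LL"
  have "{c\<in>LL. dl a c < dl a b} \<subset> LL" using b by auto
  then show ?thesis unfolding rf_def card_LL[symmetric] using LL_fin by (simp add: psubset_card_mono)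
qed

lemma rotation: assumes a: "a \<in> {1..n}" and b: "b \<in> LL"
  shows "int (rf a b) = (int (rho b) - int (rho a)) mod int s"
proof -
  have bn: "b \<in> {1..n}" using b LL_sub by auto
  have sLL: "s = card LL" using card_LL by simp
  have "\<exists>e. int (rf a b) = int (rho b) - int (rho a) + e * int s"
  proof (cases "a \<le> b")
    case True
    have S: "{c\<in>LL. dl a c < dl a b} = {c\<in>LL. a \<le> c \<and> c < b}"
      using dl_nat[OF a] bn True LL_sub by (auto split: if_splits)
    have U: "{c\<in>LL. c < b} = {c\<in>LL. c < a} \<union> {c\<in>LL. a \<le> c \<and> c < b}" using True by auto
    have "card {c\<in>LL. c < b} = card {c\<in>LL. c < a} + card {c\<in>LL. a \<le> c \<and> c < b}"
      unfolding U by (rule card_Un_disjoint) (auto simp: LL_fin)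
    then have "int (rf a b) = int (rho b) - int (rho a)" unfolding rf_def rho_def S by simp
    then show ?thesis by (intro exI[of _ 0]) simp
  next
    case False
    have S: "{c\<in>LL. dl a c < dl a b} = {c\<in>LL. a \<le> c} \<union> {c\<in>LL. c < b}"
      using dl_nat[OF a] bn False LL_sub by (auto split: if_splits)
    have c1: "card ({c\<in>LL. a \<le> c} \<union> {c\<in>LL. c < b}) = card {c\<in>LL. a \<le> c} + card {c\<in>LL. c < b}"
      using False by (intro card_Un_disjoint) (auto simp: LL_fin)
    have U: "LL = {c\<in>LL. c < a} \<union> {c\<in>LL. a \<le> c}" by auto
    have "card LL = card {c\<in>LL. c < a} + card {c\<in>LL. a \<le> c}"
      by (subst U, rule card_Un_disjoint) (auto simp: LL_fin)
    then have "int (rf a b) = int (rho b) - int (rho a) + 1 * int s" unfolding rf_def rho_def S c1 sLL by simp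
    then show ?thesis by blast
  qed
  then obtain e where e: "int (rf a b) = int (rho b) - int (rho a) + e * int s" by blast
  have "(int (rho b) - int (rho a)) mod int s = int (rf a b) mod int s" unfolding e by simp
  also have "\<dots> = int (rf a b)" using rf_lt[OF b] by (intro mod_pos_pos_trivial) auto
  finally show ?thesis by simp
qed

lemma GP_rho: assumes c: "c \<in> LL" and j: "j \<in> FF" and gp: "GP c j"
  shows "int (rho (l j)) mod int s = (int (rho c) + 1) mod int s"
proof -
  have j1: "j \<in> {1..m}" using j FF_sub by auto
  have lj: "l j \<in> {1..n}" using row_data[OF j1] by simp
  have "{c'\<in>LL. dl (l j) c' < dl (l j) c} = LL - {c}"
  proof
    show "{c'\<in>LL. dl (l j) c' < dl (l j) c} \<subseteq> LL - {c}" by auto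
    show "LL - {c} \<subseteq> {c'\<in>LL. dl (l j) c' < dl (l j) c}"
    proof
      fix c' assume c': "c' \<in> LL - {c}"
      have "dl (l j) c' \<le> dl (l j) c" using gp c' unfolding GP_def by simp
      moreover have "dl (l j) c' \<noteq> dl (l j) c" using dl_inj c c' LL_sub by blast
      ultimately show "c' \<in> {c'\<in>LL. dl (l j) c' < dl (l j) c}" using c' by simp
    qed
  qed
  then have "rf (l j) c = s - 1" unfolding rf_def card_LL[symmetric] using c LL_fin by simp
  moreover have "s \<ge> 1" using j FF_fin unfolding s_def by (metis One_nat_def Suc_leI card_gt_0_iff empty_iff)
  ultimately have "int s - 1 = (int (rho c) - int (rho (l j))) mod int s" using rotation[OF lj c] by simp
  then have "(int s - 1 + int (rho (l j))) mod int s = (int (rho c) - int (rho (l j)) + int (rho (l j))) mod int s"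
    by (metis mod_add_left_eq)
  moreover have "int s - 1 + int (rho (l j)) = (int (rho (l j)) - 1) + int s" by simp
  ultimately have "(int (rho (l j)) - 1) mod int s = int (rho c) mod int s"
    by (metis add.commute diff_add_cancel mod_add_self2)
  then have "(int (rho (l j)) - 1 + 1) mod int s = (int (rho c) + 1) mod int s" by (metis mod_add_left_eq)
  then show ?thesis by simp
qed

end



context cc begin

lemma rho_lt: "b \<in> LL \<Longrightarrow> rho b < s"
proof -
  assume b: "b \<in> LL"
  have "{c\<in>LL. c < b} \<subset> LL" using b by auto
  then show ?thesis unfolding rho_def card_LL[symmetric] using LL_fin by (simp add: psubset_card_mono)
qed

lemma rho_mono: "b \<in> LL \<Longrightarrow> b' \<in> LL \<Longrightarrow> b < b' \<Longrightarrow> rho b < rho b'"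
proof -
  assume b: "b \<in> LL" "b' \<in> LL" "b < b'"
  have "{c\<in>LL. c < b} \<subset> {c\<in>LL. c < b'}" using b by auto
  then show ?thesis unfolding rho_def using LL_fin by (simp add: psubset_card_mono)
qed

lemma rho_bij: "bij_betw rho LL {..<s}"
proof (rule bij_by_card)
  show "inj_on rho LL"
  proof (rule inj_onI)
    fix b b' assume "b \<in> LL" "b' \<in> LL" "rho b = rho b'"
    then show "b = b'" using rho_mono by (metis less_irrefl linorder_neqE_nat)
  qed
  show "rho ` LL \<subseteq> {..<s}" using rho_lt by auto
  show "card LL = card {..<s}" using card_LL by simp
qed simp

definition lam where "lam = inv_into LL rho"

lemma lam_prop: "x < s \<Longrightarrow> lam x \<in> LL \<and> rho (lam x) = x"
  unfolding lam_def using rho_bij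
  by (metis bij_betw_def f_inv_into_f inv_into_into lessThan_iff)

lemma lam_bij: "bij_betw lam {..<s} LL"
  unfolding lam_def using rho_bij by (rule bij_betw_inv_into)

lemma key_entry: assumes ne: "FF \<noteq> {}" and c0: "c0 \<in> LL" and b: "b \<in> LL"
  shows "A (g c0) b \<longleftrightarrow> (int (rho b) - int (rho c0) - 1) mod int s < p"
proof -
  have gj: "g c0 \<in> FF" "GP c0 (g c0)" using g_prop[OF ne c0] by auto
  have j1: "g c0 \<in> {1..m}" using gj FF_sub by auto
  have lj: "l (g c0) \<in> {1..n}" using row_data[OF j1] by simp
  have "A (g c0) b \<longleftrightarrow> int (rf (l (g c0)) b) < p" by (rule R1[OF gj(1) b])
  also have "int (rf (l (g c0)) b) = (int (rho b) - int (rho (l (g c0)))) mod int s"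
    by (rule rotation[OF lj b])
  also have "\<dots> = (int (rho b) - int (rho (l (g c0))) mod int s) mod int s"
    by (simp add: mod_diff_right_eq)
  also have "\<dots> = (int (rho b) - (int (rho c0) + 1) mod int s) mod int s"
    using GP_rho[OF c0 gj(1) gj(2)] by simp
  also have "\<dots> = (int (rho b) - int (rho c0) - 1) mod int s"
    by (simp add: mod_diff_right_eq algebra_simps)
  finally show ?thesis .
qed

lemma circ_part: assumes ne: "FF \<noteq> {}"
  shows "\<exists>\<sigma> \<tau>. bij_betw \<sigma> {1..s} FF \<and> bij_betw \<tau> {1..s} LL \<and>
            (\<forall>a\<in>{1..s}. \<forall>b\<in>{1..s}. A (\<sigma> a) (\<tau> b) \<longleftrightarrow> circulant s p a b)"
proof -
  have sp: "s > 0" using ne FF_fin unfolding s_def by (simp add: card_gt_0_iff)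
  define h1 where "h1 a = nat ((int a - 2) mod int s)" for a :: nat
  define h2 where "h2 b = b - 1" for b :: nat
  have h1v: "int (h1 a) = (int a - 2) mod int s" for a unfolding h1_def using sp by simp
  have bh1: "bij_betw h1 {1..s} {..<s}"
  proof (rule bij_by_card)
    show "inj_on h1 {1..s}"
    proof (rule inj_onI)
      fix a a' assume a: "a \<in> {1..s}" "a' \<in> {1..s}" "h1 a = h1 a'"
      then have "(int a - 2) mod int s = (int a' - 2) mod int s" using h1v by metis
      then have "(int a - 2 + 2) mod int s = (int a' - 2 + 2) mod int s" by (metis mod_add_left_eq)
      then have "int a mod int s = int a' mod int s" by simp
      then have "a mod s = a' mod s" by (metis of_nat_eq_iff zmod_int)
      then show "a = a'" using a by (cases "a = s"; cases "a' = s") auto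
    qed
    show "h1 ` {1..s} \<subseteq> {..<s}" using h1v sp by (auto simp: h1_def nat_less_iff)
  qed simp_all
  have bh2: "bij_betw h2 {1..s} {..<s}"
  proof (rule bij_by_card)
    show "inj_on h2 {1..s}" unfolding h2_def by (rule inj_onI) auto
    show "h2 ` {1..s} \<subseteq> {..<s}" unfolding h2_def by auto
  qed simp_all
  define \<sigma> where "\<sigma> a = g (lam (h1 a))" for a
  define \<tau> where "\<tau> b = lam (h2 b)" for b
  have bs: "bij_betw \<sigma> {1..s} FF"
  proof -
    have "bij_betw (lam \<circ> h1) {1..s} LL" using bij_betw_trans[OF bh1 lam_bij] .
    then have "bij_betw (g \<circ> (lam \<circ> h1)) {1..s} FF" using bij_betw_trans g_bij[OF ne] by blast
    then show ?thesis unfolding \<sigma>_def comp_def .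
  qed
  have bt: "bij_betw \<tau> {1..s} LL"
    using bij_betw_trans[OF bh2 lam_bij] unfolding \<tau>_def comp_def .
  have ent: "A (\<sigma> a) (\<tau> b) \<longleftrightarrow> circulant s p a b" if a: "a \<in> {1..s}" and b: "b \<in> {1..s}" for a b
  proof -
    have x1: "h1 a < s" using bh1 a unfolding bij_betw_def by auto
    have x2: "h2 b < s" using bh2 b unfolding bij_betw_def by auto
    have l1: "lam (h1 a) \<in> LL" "rho (lam (h1 a)) = h1 a" using lam_prop[OF x1] by auto
    have l2: "lam (h2 b) \<in> LL" "rho (lam (h2 b)) = h2 b" using lam_prop[OF x2] by auto
    have "A (\<sigma> a) (\<tau> b) \<longleftrightarrow> (int (h2 b) - int (h1 a) - 1) mod int s < p"
      unfolding \<sigma>_def \<tau>_def using key_entry[OF ne l1(1) l2(1)] l1 l2 by simp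
    also have "(int (h2 b) - int (h1 a) - 1) mod int s = (int b - int a) mod int s"
    proof -
      have "int (h2 b) = int b - 1" unfolding h2_def using b by auto
      then have e: "(int (h2 b) - int (h1 a) - 1) = (int b - 2) - (int a - 2) mod int s" unfolding h1v by simp
      have "((int b - 2) - (int a - 2) mod int s) mod int s = ((int b - 2) - (int a - 2)) mod int s"
        by (rule mod_diff_right_eq)
      then show ?thesis unfolding e by simp
    qed
    finally show ?thesis unfolding circulant_def .
  qed
  show ?thesis using bs bt ent by blast
qed

end



context cc begin

lemma cyc_cyc: "cyc n (int (cyc n x) + y) = cyc n (x + y)"
proof -
  have "(int (cyc n x) + y) mod int n = (x + y) mod int n"
    using cyc_mod[OF n_pos, of x] by (metis mod_add_left_eq)
  then show ?thesis using cyc_eq_cyc[OF n_pos] by blast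
qed

lemma cyc_cyc2: "cyc n (int (cyc n x) - y) = cyc n (x - y)"
  using cyc_cyc[of x "- y"] by simp

lemma c_as_cyc: "c \<in> {1..n} \<Longrightarrow> c = cyc n (int a + dl a c)"
proof -
  assume c: "c \<in> {1..n}"
  have "(int a + dl a c) mod int n = int c mod int n" unfolding dl_def
    by (metis add.commute diff_add_cancel mod_add_left_eq)
  then show ?thesis using cyc_eq_iff[OF n_pos c, of "int a + dl a c"] by simp
qed

lemma claimN_B:
  assumes tt: "t < t'" "t' < r" and Rt: "E t = RowArc i" and Rt': "E t' = RowArc j"
    and between: "\<forall>v. t < v \<and> v < t' \<longrightarrow> \<not> isR (E v)"
  shows "\<exists>B. B \<in> LL \<and> A i B \<and> (\<forall>c\<in>LL. A i c \<longrightarrow> dl (l i) c \<le> dl (l i) B) \<and> GP B j"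
proof -
  have i1: "i \<in> {1..m}" using E_R[OF Rt] .
  have ki: "2 \<le> k i" "k i \<le> n - 1" "l i \<in> {1..n}" using row_data[OF i1] by auto
  define w where "w = Suc t"
  define q where "q = t' - w"
  have t'q: "t' = w + q" unfolding q_def w_def using tt by simp
  have nR: "\<forall>q'<q. \<not> isR (E (w + q'))" using between unfolding w_def q_def by auto
  have tvw: "tv w = cyc n (int (l i) + int (k i) - 1)" using hv_tv[of t] hvR[OF Rt] w_def by simp
  have dlw: "dl (l i) (tv w) = int (k i) - 1"
  proof -
    have "(int (k i) - 1) mod int n = int (k i) - 1" using ki by (intro mod_small) auto
    then show ?thesis unfolding tvw dl_cyc by simp
  qed
  have Aiff: "A i c \<longleftrightarrow> dl (l i) c < int (k i)" if "c \<in> LL" for c using A_iff[OF i1] that LL_sub by auto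
  show ?thesis
  proof (cases "isV (E w)")
    case False
    have BL: "tv w \<in> LL" using LL_char[of t] Rt False w_def by simp
    have GPB: "GP (tv w) j"
    proof (cases "q = 0")
      case True then show ?thesis using Frun_GP[OF BL, of 0 j] Rt' t'q by simp
    next
      case False
      then have "\<not> isR (E (w + 0))" using nR by blast
      then have "isF (E w)" using \<open>\<not> isV (E w)\<close> arc_cases3[of "E w"] by auto
      then have "\<forall>q'<q. isF (E (w + q'))" using nonR_F[OF _ nR] by blast
      then show ?thesis using Frun_GP[OF BL _ ] Rt' t'q by blast
    qed
    show ?thesis
    proof (intro exI conjI)
      show "tv w \<in> LL" by (rule BL)
      show "A i (tv w)" using Aiff[OF BL] dlw by simp
      show "\<forall>c\<in>LL. A i c \<longrightarrow> dl (l i) c \<le> dl (l i) (tv w)" using Aiff dlw by auto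
      show "GP (tv w) j" by (rule GPB)
    qed
  next
    case True
    have q1: "q \<ge> 1" using True Rt' t'q by (cases q) auto
    have allV: "\<forall>q'<q. isV (E (w + q'))" using nonR_V[OF True nR] by blast
    have tvq: "tv (w + q') = cyc n (int (l i) + int (k i) - 1 - int q')" if "q' \<le> q" for q'
      using runV[OF allV that] unfolding tvw cyc_cyc2 by (simp add: algebra_simps)
    have qk: "q \<le> k i - 1"
    proof (rule ccontr)
      assume "\<not> q \<le> k i - 1"
      then have "k i \<le> q" by simp
      then have "tv (w + k i) = cyc n (int (l i) - 1)" using tvq[of "k i"] by simp
      then have "tv (w + k i) = tv t" using tvR[OF Rt] by simp
      then have "(w + k i) mod r = t mod r" by (rule tv_inj)
      moreover have "w + k i < r" using \<open>k i \<le> q\<close> t'q tt by simp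
      ultimately show False using tt w_def by simp
    qed
    define B where "B = tv (w + q)"
    have BL: "B \<in> LL"
    proof -
      have "q - 1 < q" using q1 by simp
      then have "isV (E (w + (q - 1)))" using allV by blast
      then have "\<not> isF (E (w + (q - 1)))" by (cases "E (w + (q - 1))") auto
      moreover have "Suc (w + (q - 1)) = w + q" using q1 by simp
      ultimately show ?thesis using LL_char[of "w + (q - 1)"] Rt' t'q unfolding B_def by simp
    qed
    have GPB: "GP B j" using Frun_GP[OF _ _ , of t' 0 j] BL Rt' t'q unfolding B_def by simp
    have dlB: "dl (l i) B = int (k i) - 1 - int q"
    proof -
      have "(int (k i) - 1 - int q) mod int n = int (k i) - 1 - int q" using ki qk by (intro mod_small) auto
      moreover have "int (l i) + int (k i) - 1 - int q - int (l i) = int (k i) - 1 - int q" by simp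
      ultimately show ?thesis unfolding B_def tvq[OF order_refl] dl_cyc by presburger
    qed
    show ?thesis
    proof (intro exI conjI)
      show "B \<in> LL" by (rule BL)
      show "A i B" using Aiff[OF BL] dlB by simp
      show "GP B j" by (rule GPB)
      show "\<forall>c\<in>LL. A i c \<longrightarrow> dl (l i) c \<le> dl (l i) B"
      proof (intro ballI impI)
        fix c assume c: "c \<in> LL" "A i c"
        show "dl (l i) c \<le> dl (l i) B"
        proof (rule ccontr)
          assume h: "\<not> dl (l i) c \<le> dl (l i) B"
          have dr: "0 \<le> dl (l i) c" "dl (l i) c < int (k i)" using c Aiff dl_range by auto
          define q' where "q' = nat (int (k i) - 1 - dl (l i) c)"
          have q'v: "int q' = int (k i) - 1 - dl (l i) c" unfolding q'_def using dr by simp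
          have q'q: "q' < q" using q'v h dlB by linarith
          have "c = cyc n (int (l i) + dl (l i) c)" using c_as_cyc c LL_sub by auto
          also have "\<dots> = tv (w + q')" using tvq[of q'] q'q q'v by (simp add: algebra_simps)
          finally have "c = tv (w + q')" .
          moreover have "isV (E (w + q'))" using allV q'q by simp
          ultimately have "Rev c \<in> set G" using Rev_in_iff by simp
          then show False using LL_notV c by simp
        qed
      qed
    qed
  qed
qed

end



lemma modh: "(Y + (X - Y) mod s + 1) mod (s::int) = (X + 1) mod s"
proof -
  have e: "Y + (X - Y) mod s + 1 = (Y + 1) + (X - Y) mod s" by simp
  show ?thesis unfolding e mod_add_right_eq by (simp add: add.commute)
qed

context cc begin

lemma claimN:
  assumes tt: "t < t'" "t' < r" and Rt: "E t = RowArc i" and Rt': "E t' = RowArc j"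
    and between: "\<forall>v. t < v \<and> v < t' \<longrightarrow> \<not> isR (E v)"
  shows "int (rho (l j)) mod int s = (int (rho (l i)) + p) mod int s"
proof -
  obtain B where B: "B \<in> LL" "A i B" "\<forall>c\<in>LL. A i c \<longrightarrow> dl (l i) c \<le> dl (l i) B" "GP B j"
    using claimN_B[OF assms] by blast
  have iF: "i \<in> FF" unfolding FF_def row_arc_rows_def using E_R[OF Rt] E_set[of t] Rt by auto
  have jF: "j \<in> FF" unfolding FF_def row_arc_rows_def using E_R[OF Rt'] E_set[of t'] Rt' by auto
  have i1: "i \<in> {1..m}" using iF FF_sub by auto
  have li: "l i \<in> {1..n}" using row_data[OF i1] by simp
  have Bn: "B \<in> {1..n}" using B LL_sub by auto
  have S: "{c\<in>LL. dl (l i) c < dl (l i) B} = {c\<in>LL. A i c} - {B}"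
  proof
    show "{c\<in>LL. dl (l i) c < dl (l i) B} \<subseteq> {c\<in>LL. A i c} - {B}"
    proof
      fix c assume c: "c \<in> {c\<in>LL. dl (l i) c < dl (l i) B}"
      have cn: "c \<in> {1..n}" using c LL_sub by auto
      have "dl (l i) B < int (k i)" using B(2) A_iff[OF i1 Bn] by simp
      then have "A i c" using c A_iff[OF i1 cn] by simp
      then show "c \<in> {c\<in>LL. A i c} - {B}" using c by auto
    qed
    show "{c\<in>LL. A i c} - {B} \<subseteq> {c\<in>LL. dl (l i) c < dl (l i) B}"
    proof
      fix c assume c: "c \<in> {c\<in>LL. A i c} - {B}"
      have cn: "c \<in> {1..n}" using c LL_sub by auto
      have "dl (l i) c \<le> dl (l i) B" using B(3) c by simp
      moreover have "dl (l i) c \<noteq> dl (l i) B" using dl_inj[OF cn Bn] c by auto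
      ultimately show "c \<in> {c\<in>LL. dl (l i) c < dl (l i) B}" using c by simp
    qed
  qed
  have "card ({c\<in>LL. A i c} - {B}) = card {c\<in>LL. A i c} - 1" using B LL_fin by simp
  moreover have "card {c\<in>LL. A i c} \<ge> 1" using B LL_fin card_gt_0_iff[of "{c\<in>LL. A i c}"] by fastforce
  ultimately have "int (rf (l i) B) = p - 1" using row_exact[OF iF] unfolding rf_def S by linarith
  then have e1: "(int (rho B) - int (rho (l i))) mod int s = p - 1" using rotation[OF li B(1)] by simp
  have e2: "int (rho (l j)) mod int s = (int (rho B) + 1) mod int s" by (rule GP_rho[OF B(1) jF B(4)])
  have "int (rho (l i)) + p = int (rho (l i)) + (int (rho B) - int (rho (l i))) mod int s + 1"
    using e1 by simp
  then have "(int (rho (l i)) + p) mod int s = (int (rho (l i)) + (int (rho B) - int (rho (l i))) mod int s + 1) mod int s"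
    by (rule arg_cong)
  also have "\<dots> = (int (rho B) + 1) mod int s" by (rule modh)
  finally show ?thesis using e2 by simp
qed

definition kap where "kap u = int (rho (l (ridx (E u))))"

lemma gcd_part: assumes ne: "FF \<noteq> {}" shows "gcd (int s) p = 1"
proof -
  let ?R = "{u. u < r \<and> isR (E u)}"
  have fR: "finite ?R" by simp
  have cR: "card ?R = s" using bij_betw_same_card[OF row_idx_bij] unfolding s_def by simp
  have sp: "s > 0" using ne FF_fin unfolding s_def by (simp add: card_gt_0_iff)
  have neR: "?R \<noteq> {}"
  proof
    assume "?R = {}"
    then have "card ?R = 0" by simp
    then show False using cR sp by simp
  qed
  define u0 where "u0 = Min ?R"
  have u0R: "u0 \<in> ?R" unfolding u0_def using fR neR by (rule Min_in)
  define d where "d = gcd (int s) p"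
  have dpos: "d > 0" unfolding d_def using sp by simp
  have ds: "d dvd int s" and dp: "d dvd p" unfolding d_def by auto
  have inv: "u \<in> ?R \<Longrightarrow> kap u mod d = kap u0 mod d" for u
  proof (induction u rule: less_induct)
    case (less u)
    show ?case
    proof (cases "u = u0")
      case True then show ?thesis by simp
    next
      case False
      have "u0 \<le> u" unfolding u0_def using fR less.prems by simp
      then have "u0 < u" using False by simp
      let ?V = "{v\<in>?R. v < u}"
      have fV: "finite ?V" by simp
      have neV: "?V \<noteq> {}" using u0R \<open>u0 < u\<close> by blast
      define v where "v = Max ?V"
      have vV: "v \<in> ?V" unfolding v_def using fV neV by (rule Max_in)
      have btw: "\<forall>x. v < x \<and> x < u \<longrightarrow> \<not> isR (E x)"
      proof (intro allI impI)
        fix x assume x: "v < x \<and> x < u"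
        show "\<not> isR (E x)"
        proof
          assume "isR (E x)"
          then have "x \<in> ?V" using x less.prems by simp
          then have "x \<le> v" unfolding v_def using fV by simp
          then show False using x by simp
        qed
      qed
      obtain i where i: "E v = RowArc i" using vV by (cases "E v") auto
      obtain j where j: "E u = RowArc j" using less.prems by (cases "E u") auto
      have "int (rho (l j)) mod int s = (int (rho (l i)) + p) mod int s"
        using claimN[OF _ _ i j btw] vV less.prems by simp
      then have "kap u mod int s = (kap v + p) mod int s" unfolding kap_def using i j by simp
      then have "(kap u mod int s) mod d = ((kap v + p) mod int s) mod d" by simp
      then have "kap u mod d = (kap v + p) mod d" using ds by (simp add: mod_mod_cancel)
      also have "\<dots> = (kap v + p mod d) mod d" by (rule mod_add_right_eq[symmetric])
      also have "\<dots> = kap v mod d" using dp by simp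
      also have "\<dots> = kap u0 mod d" using less.IH[of v] vV by simp
      finally show ?thesis .
    qed
  qed
  have injm: "u = u'" if u: "u \<in> ?R" "u' \<in> ?R" "kap u mod int s = kap u' mod int s" for u u'
  proof -
    have gb: "bij_betw g LL FF" by (rule g_bij[OF ne])
    have rF: "ridx (E x) \<in> FF" if "x \<in> ?R" for x using row_idx_bij that unfolding bij_betw_def by auto
    have "ridx (E u) \<in> g ` LL" using rF[OF u(1)] gb unfolding bij_betw_def by simp
    then obtain c where c: "c \<in> LL" "ridx (E u) = g c" by blast
    have "ridx (E u') \<in> g ` LL" using rF[OF u(2)] gb unfolding bij_betw_def by simp
    then obtain c' where c': "c' \<in> LL" "ridx (E u') = g c'" by blast
    have gc: "g c \<in> FF" "GP c (g c)" using g_prop[OF ne c(1)] by auto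
    have gc': "g c' \<in> FF" "GP c' (g c')" using g_prop[OF ne c'(1)] by auto
    have "kap u mod int s = (int (rho c) + 1) mod int s"
      unfolding kap_def c(2) by (rule GP_rho[OF c(1) gc])
    moreover have "kap u' mod int s = (int (rho c') + 1) mod int s"
      unfolding kap_def c'(2) by (rule GP_rho[OF c'(1) gc'])
    ultimately have "(int (rho c) + 1) mod int s = (int (rho c') + 1) mod int s" using u(3) by simp
    then have "(int (rho c) + 1 - 1) mod int s = (int (rho c') + 1 - 1) mod int s" by (rule mod_diff_cong) simp
    then have "int (rho c) mod int s = int (rho c') mod int s" by simp
    moreover have "int (rho c) < int s" "int (rho c') < int s" using rho_lt c c' by auto
    ultimately have "rho c = rho c'" by (simp add: mod_pos_pos_trivial)
    then have "c = c'" using rho_bij c c' unfolding bij_betw_def inj_on_def by blast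
    then have "ridx (E u) = ridx (E u')" using c c' by simp
    then show "u = u'" using row_idx_bij u(1,2) unfolding bij_betw_def inj_on_def by blast
  qed
  define phi where "phi u = (kap u mod int s) div d" for u
  have phi_in: "phi ` ?R \<subseteq> {0..<int s div d}"
  proof
    fix x assume "x \<in> phi ` ?R"
    then obtain u where x: "x = phi u" by blast
    have a: "0 \<le> kap u mod int s" "kap u mod int s < int s" using sp by simp_all
    have "int s = d * (int s div d)" using ds by simp
    then have "kap u mod int s < (int s div d) * d" using a by (simp add: mult.commute)
    moreover have "kap u mod int s = (kap u mod int s) div d * d + (kap u mod int s) mod d" by simp
    moreover have "(kap u mod int s) mod d \<ge> 0" using dpos by simp
    ultimately have "(kap u mod int s) div d * d < (int s div d) * d" by linarith
    then have "kap u mod int s div d < int s div d" using mult_less_cancel_right_pos[OF dpos] by blast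
    then show "x \<in> {0..<int s div d}" unfolding x phi_def using a dpos by (simp add: pos_imp_zdiv_nonneg_iff)
  qed
  have phi_inj: "inj_on phi ?R"
  proof (rule inj_onI)
    fix u u' assume u: "u \<in> ?R" "u' \<in> ?R" "phi u = phi u'"
    have "(kap u mod int s) mod d = (kap u' mod int s) mod d"
      using inv[OF u(1)] inv[OF u(2)] ds by (simp add: mod_mod_cancel)
    moreover have "(kap u mod int s) div d = (kap u' mod int s) div d" using u(3) unfolding phi_def .
    moreover have "kap u mod int s = (kap u mod int s) div d * d + (kap u mod int s) mod d" by simp
    moreover have "kap u' mod int s = (kap u' mod int s) div d * d + (kap u' mod int s) mod d" by simp
    ultimately have "kap u mod int s = kap u' mod int s" by simp
    then show "u = u'" using injm u by blast
  qed
  have "card ?R \<le> card {0..<int s div d}" using card_inj_on_le[OF phi_inj phi_in] by simp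
  then have "s \<le> nat (int s div d)" using cR by simp
  moreover have "int s div d \<ge> 0" using dpos by (simp add: pos_imp_zdiv_nonneg_iff)
  ultimately have "int s \<le> int s div d" by (simp add: le_nat_iff)
  then have "d \<le> 1"
  proof -
    assume h: "int s \<le> int s div d"
    show "d \<le> 1"
    proof (rule ccontr)
      assume "\<not> d \<le> 1"
      then have "int s div d < int s" using sp by (intro int_div_less_self) auto
      then show False using h by simp
    qed
  qed
  then show ?thesis using dpos unfolding d_def by linarith
qed

end



context cc begin

lemma noR: assumes "FF = {}" shows "\<not> isR (E u)"
proof
  assume "isR (E u)"
  then have "isR (E (u mod r))" using E_mod by simp
  then have "u mod r \<in> {u. u < r \<and> isR (E u)}" using r_pos by simp
  then have "ridx (E (u mod r)) \<in> FF" using row_idx_bij unfolding bij_betw_def by blast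
  then show False using assms by simp
qed

lemma zero_case: assumes ne: "FF = {}" shows "p = 1 \<or> p = -1"
proof -
  have E0: "E 0 \<in> F_arcs m n" by (rule E_F)
  have E0u: "E u = E 0 \<Longrightarrow> u < r \<Longrightarrow> u = 0" for u
  proof -
    assume "E u = E 0" "u < r"
    then have "tv u = tv 0" unfolding tv_def by simp
    then have "u mod r = 0 mod r" by (rule tv_inj)
    then show "u = 0" using \<open>u < r\<close> by simp
  qed
  show ?thesis
  proof (cases "E 0")
    case (RowArc i) then show ?thesis using noR[OF ne, of 0] by simp
  next
    case (Fwd c)
    have c: "c \<in> {1..n}" using E_Fw[OF Fwd] .
    have cv: "cov (E u) c = (if u = 0 then 1 else 0)" if u: "u < r" for u
    proof (cases "E u")
      case (RowArc x1) then show ?thesis using noR[OF ne, of u] by simp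
    next
      case (Fwd x2)
      show ?thesis
      proof (cases "u = 0")
        case True then show ?thesis using Fwd \<open>E 0 = Fwd c\<close> by (simp add: cov_def)
      next
        case False
        then have "x2 \<noteq> c" using E0u[of u] u \<open>E 0 = Fwd c\<close> Fwd by auto
        then show ?thesis using Fwd False by (simp add: cov_def)
      qed
    next
      case (Rev x3)
      have "x3 \<noteq> c" using FV_excl E_set[of u] E_set[of 0] Rev \<open>E 0 = Fwd c\<close> by metis
      moreover have "u \<noteq> 0" using Rev \<open>E 0 = Fwd c\<close> by (cases "u = 0") auto
      ultimately show ?thesis using Rev by (simp add: cov_def)
    qed
    have "p = (\<Sum>u<r. cov (E u) c)" using factW[OF c] by simp
    also have "\<dots> = (\<Sum>u<r. if u = 0 then 1 else 0)" using cv by simp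
    also have "\<dots> = 1" using r_pos by simp
    finally show ?thesis by simp
  next
    case (Rev c)
    have c: "c \<in> {1..n}" using E_V[OF Rev] .
    have cv: "cov (E u) c = (if u = 0 then -1 else 0)" if u: "u < r" for u
    proof (cases "E u")
      case (RowArc x1) then show ?thesis using noR[OF ne, of u] by simp
    next
      case (Rev x2)
      show ?thesis
      proof (cases "u = 0")
        case True then show ?thesis using Rev \<open>E 0 = Rev c\<close> by (simp add: cov_def)
      next
        case False
        then have "x2 \<noteq> c" using E0u[of u] u \<open>E 0 = Rev c\<close> Rev by auto
        then show ?thesis using Rev False by (simp add: cov_def)
      qed
    next
      case (Fwd x3)
      have "x3 \<noteq> c" using FV_excl E_set[of u] E_set[of 0] Fwd \<open>E 0 = Rev c\<close> by metis
      moreover have "u \<noteq> 0" using Fwd \<open>E 0 = Rev c\<close> by (cases "u = 0") auto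
      ultimately show ?thesis using Fwd by (simp add: cov_def)
    qed
    have "p = (\<Sum>u<r. cov (E u) c)" using factW[OF c] by simp
    also have "\<dots> = (\<Sum>u<r. if u = 0 then -1 else 0)" using cv by simp
    also have "\<dots> = -1" using r_pos by simp
    finally show ?thesis by simp
  qed
qed

end

theorem corollary7p3:
  fixes m n :: nat and A :: "nat \<Rightarrow> nat \<Rightarrow> bool" and l k :: "nat \<Rightarrow> nat"
    and G :: "arc list" and p :: int
  assumes circ: "circular_with m n A l k"
    and nodom: "no_dominating_rows m n A"
    and circuit: "is_circuit m n l k G"
    and nondeg: "\<not> (\<exists>j. set G = {Fwd j, Rev j})"
    and wind: "winding_number n k G p"
  shows "(\<exists>\<sigma> \<tau>. bij_betw \<sigma> {1..card (row_arc_rows m G)} (row_arc_rows m G) \<and>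
            bij_betw \<tau> {1..card (row_arc_rows m G)} (essential_bullets n l k G) \<and>
            (\<forall>a\<in>{1..card (row_arc_rows m G)}. \<forall>b\<in>{1..card (row_arc_rows m G)}.
               A (\<sigma> a) (\<tau> b) \<longleftrightarrow> circulant (card (row_arc_rows m G)) p a b))
         \<and> gcd (int (card (row_arc_rows m G))) p = 1"
proof -
  interpret cc m n A l k G p using assms by unfold_locales
  have FFd: "row_arc_rows m G = FF" by (simp add: FF_def)
  have LLd: "essential_bullets n l k G = LL" by (simp add: LL_def)
  have sd: "card (row_arc_rows m G) = s" by (simp add: s_def FF_def)
  have main: "(\<exists>\<sigma> \<tau>. bij_betw \<sigma> {1..s} FF \<and> bij_betw \<tau> {1..s} LL \<and>
            (\<forall>a\<in>{1..s}. \<forall>b\<in>{1..s}. A (\<sigma> a) (\<tau> b) \<longleftrightarrow> circulant s p a b))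
         \<and> gcd (int s) p = 1"
  proof (cases "FF = {}")
    case True
    have s0: "s = 0" using True unfolding s_def by simp
    have "card LL = 0" using card_LL s0 by simp
    then have L0: "LL = {}" using LL_fin by simp
    have "p = 1 \<or> p = -1" by (rule zero_case[OF True])
    then have "gcd (int s) p = 1" using s0 by auto
    moreover have "bij_betw id {1..s} FF" "bij_betw id {1..s} LL" using s0 True L0 by simp_all
    ultimately show ?thesis using s0 by auto
  next
    case False
    show ?thesis using circ_part[OF False] gcd_part[OF False] by blast
  qed
  show ?thesis using main unfolding FFd LLd s_def[symmetric] .
qed



end
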